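(* In the setting of the context, let $\lambda_2$ be the second largest singular value (counted with multiplicity) of $\mathcal B$. Then $$\lambda_2=\max\{\|\Im(B^*u)\|:\ u\in\mathbb C^n,\ \langle iu,x_0\rangle=0,\ \|u\|=1\}=\max\{\|\mathcal B^\top u\|:\ u\in\mathbb R^{2n},\ u\perp G(x_0),\ \|u\|=1\}.$$
   Context: $A^*\in\mathbb C^{N\times n}$ is isometric ($AA^*=I_n$), $N\ge2n$, $x_0\in\mathbb C^n$ with $\|x_0\|=1$, $B=A\,\mathrm{diag}\big(\frac{A^*x_0}{|A^*x_0|}\big)$ (componentwise quotient, convention $y(j)/|y(j)|=1$ if $y(j)=0$), $\mathcal B=\begin{bmatrix}\Re B\\ \Im B\end{bmatrix}\in\mathbb R^{2n\times N}$. $G(v):=\begin{bmatrix}\Re v\\ \Im v\end{bmatrix}$. The real inner product on $\mathbb C^n$ is $\langle u,v\rangle=\Re(u^*v)$; on $\mathbb R^{2n}$, $\perp$ means orthogonal for the dot product. *)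

theory Defs
  imports "Jordan_Normal_Form.Schur_Decomposition" "Jordan_Normal_Form.Char_Poly"
    "HOL-Computational_Algebra.Polynomial"
begin

definition cnorm :: "complex vec \<Rightarrow> real" where
  "cnorm v = sqrt (\<Sum>i<dim_vec v. (cmod (v $ i))\<^sup>2)"

definition rnorm :: "real vec \<Rightarrow> real" where
  "rnorm v = sqrt (\<Sum>i<dim_vec v. (v $ i)\<^sup>2)"

definition cinner_re :: "complex vec \<Rightarrow> complex vec \<Rightarrow> real" where
  "cinner_re u v = Re (\<Sum>i<dim_vec v. cnj (u $ i) * v $ i)"

definition phase_vec :: "complex vec \<Rightarrow> complex vec" where
  "phase_vec y = vec (dim_vec y) (\<lambda>j. if y $ j = 0 then 1 else y $ j / complex_of_real (cmod (y $ j)))"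

definition diag_of_vec :: "complex vec \<Rightarrow> complex mat" where
  "diag_of_vec d = mat (dim_vec d) (dim_vec d) (\<lambda>(i,j). if i = j then d $ i else 0)"

definition phaseB :: "complex mat \<Rightarrow> complex vec \<Rightarrow> complex mat" where
  "phaseB A x0 = A * diag_of_vec (phase_vec (mat_adjoint A *\<^sub>v x0))"

definition realify :: "complex mat \<Rightarrow> real mat" where
  "realify M = mat (2 * dim_row M) (dim_col M)
     (\<lambda>(i,j). if i < dim_row M then Re (M $$ (i,j)) else Im (M $$ (i - dim_row M, j)))"

definition Gvec :: "complex vec \<Rightarrow> real vec" where
  "Gvec v = vec (2 * dim_vec v) (\<lambda>i. if i < dim_vec v then Re (v $ i) else Im (v $ (i - dim_vec v)))"

definition Im_vec :: "complex vec \<Rightarrow> real vec" where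
  "Im_vec v = vec (dim_vec v) (\<lambda>i. Im (v $ i))"

definition gram_eigenvalues :: "real mat \<Rightarrow> complex multiset" where
  "gram_eigenvalues M = proots (char_poly (map_mat complex_of_real (transpose_mat M * M)))"

(* singular values of a real p x q matrix, in non-increasing order, counted with
   multiplicity: square roots of the eigenvalues of M^T M (which are real and
   nonnegative), the largest min(p,q) of them *)
definition singular_values :: "real mat \<Rightarrow> real list" where
  "singular_values M = take (min (dim_row M) (dim_col M))
     (rev (sorted_list_of_multiset (image_mset (\<lambda>z. sqrt (Re z)) (gram_eigenvalues M))))"

definition is_max_of :: "real set \<Rightarrow> real \<Rightarrow> bool" where
  "is_max_of S m \<longleftrightarrow> m \<in> S \<and> (\<forall>x\<in>S. x \<le> m)"

end

theory Submission
  imports Defs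
begin


lemma adj_dims[simp]:
  "dim_row (mat_adjoint A) = dim_col A" "dim_col (mat_adjoint A) = dim_row A"
  unfolding mat_adjoint_def by auto

lemma adj_carrier[simp]: "A \<in> carrier_mat n m \<Longrightarrow> mat_adjoint A \<in> carrier_mat m n"
  unfolding carrier_mat_def by auto

lemma adj_index[simp]: "i < dim_col A \<Longrightarrow> j < dim_row A \<Longrightarrow>
  mat_adjoint A $$ (i,j) = conjugate (A $$ (j,i))"
  unfolding mat_adjoint_def mat_of_rows_def by (auto simp: cols_def)

lemma adj_adj[simp]: "mat_adjoint (mat_adjoint (A :: 'a :: conjugatable_field mat)) = A"
  by (rule eq_matI, auto)

lemma adj_mult:
  fixes A :: "'a :: conjugatable_field mat"
  assumes "A \<in> carrier_mat n m" "B \<in> carrier_mat m k"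
  shows "mat_adjoint (A * B) = mat_adjoint B * mat_adjoint A"
proof (rule eq_matI)
  fix i j assume ij: "i < dim_row (mat_adjoint B * mat_adjoint A)" "j < dim_col (mat_adjoint B * mat_adjoint A)"
  then have i: "i < k" and j: "j < n" using assms by auto
  have "mat_adjoint (A * B) $$ (i, j) = conjugate (row A j \<bullet> col B i)"
    using assms i j by auto
  also have "\<dots> = (\<Sum>l<m. conjugate (A $$ (j,l)) * conjugate (B $$ (l,i)))"
    using assms i j unfolding scalar_prod_def
    by (simp add: sum_conjugate conjugate_dist_mul atLeast0LessThan)
  also have "\<dots> = row (mat_adjoint B) i \<bullet> col (mat_adjoint A) j"
    using assms i j unfolding scalar_prod_def
    by (auto simp: atLeast0LessThan mult.commute intro!: sum.cong)
  finally show "mat_adjoint (A * B) $$ (i, j) = (mat_adjoint B * mat_adjoint A) $$ (i, j)"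
    using assms i j by auto
qed (insert assms, auto)

lemma adj_one[simp]: "mat_adjoint (1\<^sub>m n :: complex mat) = 1\<^sub>m n"
  by (rule eq_matI, auto)

lemma adj_zero[simp]: "mat_adjoint (0\<^sub>m n m :: 'a :: conjugatable_field mat) = 0\<^sub>m m n"
  by (rule eq_matI, auto)

lemma adj_four_block_diag:
  fixes A :: "'a :: conjugatable_field mat"
  assumes "A \<in> carrier_mat n1 n1" "D \<in> carrier_mat n2 n2"
  shows "mat_adjoint (four_block_mat A (0\<^sub>m n1 n2) (0\<^sub>m n2 n1) D)
    = four_block_mat (mat_adjoint A) (0\<^sub>m n1 n2) (0\<^sub>m n2 n1) (mat_adjoint D)"
  by (rule eq_matI, insert assms, auto)

definition unitary :: "complex mat \<Rightarrow> nat \<Rightarrow> bool" where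
  "unitary U n \<longleftrightarrow> U \<in> carrier_mat n n \<and> mat_adjoint U * U = 1\<^sub>m n"

lemma unitary_right: "unitary U n \<Longrightarrow> U * mat_adjoint U = 1\<^sub>m n"
  unfolding unitary_def using mat_mult_left_right_inverse[of "mat_adjoint U" n U] by auto

lemma mult_cnj_cmod: "z * cnj z = (complex_of_real (cmod z))\<^sup>2"
  by (simp add: complex_mult_cnj cmod_power2 flip: of_real_power)

lemma cprod_self_real: fixes w :: "complex vec"
  shows "w \<bullet>c w = of_real (\<Sum>i<dim_vec w. (cmod (w $ i))\<^sup>2)"
  unfolding scalar_prod_def of_real_sum
  by (auto simp: atLeast0LessThan mult_cnj_cmod intro!: sum.cong)

lemma cprod_self_pos: fixes w :: "complex vec"
  assumes "w \<in> carrier_vec n" "w \<noteq> 0\<^sub>v n"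
  shows "(\<Sum>i<dim_vec w. (cmod (w $ i))\<^sup>2) > 0"
proof -
  from assms obtain i where i: "i < n" "w $ i \<noteq> 0" by (metis carrier_vecD eq_vecI index_zero_vec)
  have "(cmod (w $ i))\<^sup>2 \<le> (\<Sum>i<dim_vec w. (cmod (w $ i))\<^sup>2)"
    using i assms by (intro member_le_sum) auto
  moreover have "(cmod (w $ i))\<^sup>2 > 0" using i by auto
  ultimately show ?thesis by linarith
qed


lemma cprod_smult: fixes v w :: "complex vec"
  assumes "v \<in> carrier_vec n" "w \<in> carrier_vec n"
  shows "(a \<cdot>\<^sub>v v) \<bullet>c (b \<cdot>\<^sub>v w) = a * cnj b * (v \<bullet>c w)"
  using assms by (simp add: conjugate_smult_vec)

lemma adjW_entry: fixes W :: "complex mat"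
  assumes "W \<in> carrier_mat n m" "i < m" "j < m"
  shows "(mat_adjoint W * W) $$ (i,j) = col W j \<bullet>c col W i"
proof -
  have "(mat_adjoint W * W) $$ (i,j) = (\<Sum>k<n. cnj (W $$ (k,i)) * W $$ (k,j))"
    using assms by (auto simp: scalar_prod_def atLeast0LessThan intro!: sum.cong)
  also have "\<dots> = col W j \<bullet>c col W i"
    using assms unfolding scalar_prod_def by (auto simp: atLeast0LessThan intro!: sum.cong)
  finally show ?thesis .
qed

lemma unitary_ext:
  fixes v :: "complex vec"
  assumes v: "v \<in> carrier_vec n" and v1: "v \<bullet>c v = 1" and n: "n > 0"
  shows "\<exists>W. unitary W n \<and> col W 0 = v"
proof -
  interpret cof_vec_space n "TYPE(complex)" .
  have v0: "v \<noteq> 0\<^sub>v n" using v1 v by auto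
  define b where "b = basis_completion v"
  from basis_completion[OF v v0, folded b_def]
  have dist_b: "distinct b" and indep: "\<not> lin_dep (set b)" and bc: "set b \<subseteq> carrier_vec n"
    and hdb: "hd b = v" and len_b: "length b = n" by auto
  from hdb len_b n obtain vs where bv: "b = v # vs" by (cases b, auto)
  define ws where "ws = gram_schmidt n b"
  from gram_schmidt_result[OF bc dist_b indep refl, folded ws_def]
  have wsc: "set ws \<subseteq> carrier_vec n" and orth: "corthogonal ws" and lws: "length ws = n" 
    by (auto simp: len_b)
  from gram_schmidt_hd[OF v, of vs, folded bv] have hdws: "hd ws = v" unfolding ws_def .
  have ws0: "ws ! 0 = v" using hdws lws n by (cases ws, auto)
  define sc where "sc = (\<lambda>w::complex vec. complex_of_real (1 / sqrt (\<Sum>i<dim_vec w. (cmod (w $ i))\<^sup>2)))"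
  define ws' where "ws' = map (\<lambda>w. sc w \<cdot>\<^sub>v w) ws"
  define W where "W = mat_of_cols n ws'"
  have lws': "length ws' = n" using lws unfolding ws'_def by auto
  have wsi: "i < n \<Longrightarrow> ws ! i \<in> carrier_vec n" for i using wsc lws by auto
  have ws'i: "i < n \<Longrightarrow> ws' ! i = sc (ws ! i) \<cdot>\<^sub>v ws ! i" for i unfolding ws'_def using lws by auto
  have W: "W \<in> carrier_mat n n" unfolding W_def using lws' by auto
  have colW: "i < n \<Longrightarrow> col W i = sc (ws ! i) \<cdot>\<^sub>v ws ! i" for i
    unfolding W_def using lws' ws'i wsi by auto
  have sc_self: "sc w * cnj (sc w) * (w \<bullet>c w) = 1" if "w \<in> carrier_vec n" "w \<noteq> 0\<^sub>v n" for w
  proof -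
    define s where "s = (\<Sum>i<dim_vec w. (cmod (w $ i))\<^sup>2)"
    have p: "s > 0" using cprod_self_pos[OF that] unfolding s_def .
    have "sc w * cnj (sc w) * (w \<bullet>c w) = complex_of_real (1/sqrt s * (1/sqrt s) * s)"
      unfolding sc_def cprod_self_real s_def[symmetric] by (simp only: complex_cnj_complex_of_real of_real_mult)
    also have "1/sqrt s * (1/sqrt s) * s = 1" using p
      by (simp add: real_sqrt_mult[symmetric] del: real_sqrt_mult)
    finally show ?thesis by simp
  qed
  have wne: "i < n \<Longrightarrow> ws ! i \<noteq> 0\<^sub>v n" for i
  proof
    assume i: "i < n" and z: "ws ! i = 0\<^sub>v n"
    have "ws ! i \<bullet>c ws ! i \<noteq> 0" using corthogonalD[OF orth, of i i] i lws by auto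
    with z show False by simp
  qed
  have "mat_adjoint W * W = 1\<^sub>m n"
  proof (rule eq_matI)
    fix i j assume "i < dim_row (1\<^sub>m n)" "j < dim_col (1\<^sub>m n)"
    then have i: "i < n" and j: "j < n" by auto
    have "(mat_adjoint W * W) $$ (i,j) = col W j \<bullet>c col W i" using adjW_entry[OF W i j] .
    also have "\<dots> = sc (ws!j) * cnj (sc (ws!i)) * (ws!j \<bullet>c ws!i)"
      unfolding colW[OF i] colW[OF j] using cprod_smult[OF wsi[OF j] wsi[OF i]] .
    also have "\<dots> = 1\<^sub>m n $$ (i,j)"
    proof (cases "i = j")
      case True thus ?thesis using sc_self[OF wsi[OF i] wne[OF i]] i by simp
    next
      case False
      have "ws!j \<bullet>c ws!i = 0" using corthogonalD[OF orth, of j i] False i j lws by auto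
      thus ?thesis using False i j by simp
    qed
    finally show "(mat_adjoint W * W) $$ (i,j) = 1\<^sub>m n $$ (i,j)" .
  qed (insert W, auto)
  hence "unitary W n" using W unfolding unitary_def by auto
  moreover have "col W 0 = v"
  proof -
    have s1: "(\<Sum>i<dim_vec v. (cmod (v $ i))\<^sup>2) = 1" 
      using v1 unfolding cprod_self_real by (simp only: of_real_eq_1_iff)
    have "sc v = 1" unfolding sc_def s1 by simp
    thus ?thesis using colW[OF n] ws0 v by simp
  qed
  ultimately show ?thesis by blast
qed


definition diagm :: "complex list \<Rightarrow> complex mat" where
  "diagm es = mat (length es) (length es) (\<lambda>(i,j). if i = j then es!i else 0)"

lemma diagm_carrier[simp]: "diagm es \<in> carrier_mat (length es) (length es)"
  unfolding diagm_def by auto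

lemma unit_eigvec:
  fixes H :: "complex mat"
  assumes H: "H \<in> carrier_mat (Suc k) (Suc k)"
  shows "\<exists>e v. v \<in> carrier_vec (Suc k) \<and> v \<bullet>c v = 1 \<and> H *\<^sub>v v = e \<cdot>\<^sub>v v"
proof -
  obtain as where cp: "char_poly H = (\<Prod> a \<leftarrow> as. [:- a, 1:])" and len: "length as = Suc k"
    using char_poly_factorized[OF H] by blast
  then obtain e as' where as: "as = e # as'" by (cases as, auto)
  have "poly (char_poly H) e = 0" unfolding cp as by simp
  hence ev: "eigenvalue H e" using eigenvalue_root_char_poly[OF H] by simp
  define v where "v = find_eigenvector H e"
  from find_eigenvector[OF H ev] have "eigenvector H v e" unfolding v_def .
  hence v: "v \<in> carrier_vec (Suc k)" and v0: "v \<noteq> 0\<^sub>v (Suc k)" and Hv: "H *\<^sub>v v = e \<cdot>\<^sub>v v"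
    using H unfolding eigenvector_def by auto
  define s where "s = (\<Sum>i<dim_vec v. (cmod (v $ i))\<^sup>2)"
  have p: "s > 0" using cprod_self_pos[OF v v0] unfolding s_def .
  define c where "c = complex_of_real (1 / sqrt s)"
  define v1 where "v1 = c \<cdot>\<^sub>v v"
  have v1c: "v1 \<in> carrier_vec (Suc k)" unfolding v1_def using v by auto
  have "v1 \<bullet>c v1 = c * cnj c * (v \<bullet>c v)" unfolding v1_def using cprod_smult[OF v v] .
  also have "\<dots> = complex_of_real (1/sqrt s * (1/sqrt s) * s)"
    unfolding c_def cprod_self_real s_def[symmetric] by (simp only: complex_cnj_complex_of_real of_real_mult)
  also have "1/sqrt s * (1/sqrt s) * s = 1" using p
    by (simp add: real_sqrt_mult[symmetric] del: real_sqrt_mult)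
  finally have n1: "v1 \<bullet>c v1 = 1" by simp
  have "H *\<^sub>v v1 = e \<cdot>\<^sub>v v1" unfolding v1_def using H v Hv
    by (simp add: mult_mat_vec smult_smult_assoc mult.commute)
  thus ?thesis using v1c n1 by blast
qed

lemma hermitian_decomp:
  fixes H :: "complex mat"
  assumes "H \<in> carrier_mat n n" "mat_adjoint H = H"
  shows "\<exists>U es. unitary U n \<and> length es = n \<and> H = U * diagm es * mat_adjoint U"
  using assms
proof (induct n arbitrary: H)
  case 0
  show ?case
    by (rule exI[of _ "1\<^sub>m 0"], rule exI[of _ "[]"], insert 0, auto simp: unitary_def intro!: eq_matI)
next
  case (Suc k H)
  note H = Suc(2) and Hh = Suc(3)
  obtain e v where v: "v \<in> carrier_vec (Suc k)" and v1: "v \<bullet>c v = 1" and Hv: "H *\<^sub>v v = e \<cdot>\<^sub>v v"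
    using unit_eigvec[OF H] by blast
  obtain W where uW: "unitary W (Suc k)" and W0: "col W 0 = v"
    using unitary_ext[OF v v1] by blast
  have W: "W \<in> carrier_mat (Suc k) (Suc k)" and WW: "mat_adjoint W * W = 1\<^sub>m (Suc k)"
    using uW unfolding unitary_def by auto
  have WW': "W * mat_adjoint W = 1\<^sub>m (Suc k)" using unitary_right[OF uW] .
  have Wa: "mat_adjoint W \<in> carrier_mat (Suc k) (Suc k)" using W by auto
  define A' where "A' = mat_adjoint W * (H * W)"
  have A': "A' \<in> carrier_mat (Suc k) (Suc k)" unfolding A'_def using W H by auto
  have A'h: "mat_adjoint A' = A'"
  proof -
    have "mat_adjoint A' = mat_adjoint (H * W) * mat_adjoint (mat_adjoint W)"
      unfolding A'_def using W H by (intro adj_mult[of _ "Suc k" "Suc k" _ "Suc k"]) auto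
    also have "mat_adjoint (H * W) = mat_adjoint W * mat_adjoint H"
      using W H by (intro adj_mult[of _ "Suc k" "Suc k" _ "Suc k"]) auto
    finally show ?thesis unfolding A'_def Hh adj_adj using W H Wa by simp
  qed
  have col0: "A' $$ (i,0) = (if i = 0 then e else 0)" if i: "i < Suc k" for i
  proof -
    have "A' $$ (i,0) = row (mat_adjoint W) i \<bullet> col (H * W) 0"
      unfolding A'_def using i W H by auto
    also have "col (H * W) 0 = H *\<^sub>v col W 0" using H W by auto
    also have "\<dots> = e \<cdot>\<^sub>v col W 0" using W0 Hv by simp
    also have "row (mat_adjoint W) i \<bullet> (e \<cdot>\<^sub>v col W 0) = e * (row (mat_adjoint W) i \<bullet> col W 0)"
      using W i by (intro scalar_prod_smult_distrib[of _ "Suc k"]) (insert col_dim[of W 0], auto)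
    also have "row (mat_adjoint W) i \<bullet> col W 0 = (mat_adjoint W * W) $$ (i,0)"
      using W i by auto
    also have "\<dots> = (if i = 0 then 1 else 0)" unfolding WW using i by auto
    finally show ?thesis by simp
  qed
  have row0: "A' $$ (0,j) = (if j = 0 then e else 0)" if j: "j < Suc k" for j
  proof -
    have "A' $$ (0,j) = mat_adjoint A' $$ (0,j)" using A'h by simp
    also have "\<dots> = cnj (A' $$ (j,0))" using A' j by auto
    also have "\<dots> = (if j = 0 then cnj e else 0)" using col0[OF j] by simp
    also have "cnj e = e"
    proof -
      have "A' $$ (0,0) = mat_adjoint A' $$ (0,0)" using A'h by simp
      also have "\<dots> = cnj (A' $$ (0,0))" using A' by auto
      finally show ?thesis using col0[of 0] by simp
    qed
    finally show ?thesis .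
  qed
  define A3 where "A3 = mat k k (\<lambda>(i,j). A' $$ (Suc i, Suc j))"
  have A3: "A3 \<in> carrier_mat k k" unfolding A3_def by auto
  have A3h: "mat_adjoint A3 = A3"
  proof (rule eq_matI)
    fix i j assume "i < dim_row A3" "j < dim_col A3"
    hence i: "i < k" and j: "j < k" unfolding A3_def by auto
    have "mat_adjoint A3 $$ (i,j) = cnj (A' $$ (Suc j, Suc i))" using i j unfolding A3_def by auto
    also have "\<dots> = mat_adjoint A' $$ (Suc i, Suc j)" using i j A' by auto
    also have "\<dots> = A3 $$ (i,j)" unfolding A'h using i j unfolding A3_def by auto
    finally show "mat_adjoint A3 $$ (i,j) = A3 $$ (i,j)" .
  qed (auto simp: A3_def)
  obtain U3 es3 where uU3: "unitary U3 k" and les3: "length es3 = k"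
    and A3d: "A3 = U3 * diagm es3 * mat_adjoint U3"
    using Suc(1)[OF A3 A3h] by blast
  have U3: "U3 \<in> carrier_mat k k" and U3U3: "mat_adjoint U3 * U3 = 1\<^sub>m k"
    using uU3 unfolding unitary_def by auto
  define E where "E = mat 1 1 (\<lambda>_. e)"
  have E: "E \<in> carrier_mat 1 1" unfolding E_def by auto
  have A'b: "A' = four_block_mat E (0\<^sub>m 1 k) (0\<^sub>m k 1) A3"
  proof (rule eq_matI)
    fix i j assume "i < dim_row (four_block_mat E (0\<^sub>m 1 k) (0\<^sub>m k 1) A3)"
      "j < dim_col (four_block_mat E (0\<^sub>m 1 k) (0\<^sub>m k 1) A3)"
    hence i: "i < Suc k" and j: "j < Suc k" using E A3 by auto
    show "A' $$ (i,j) = four_block_mat E (0\<^sub>m 1 k) (0\<^sub>m k 1) A3 $$ (i,j)"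
    proof (cases "i = 0")
      case True thus ?thesis using row0[OF j] j E A3 by (auto simp: E_def)
    next
      case False
      then obtain i' where ii: "i = Suc i'" by (cases i, auto)
      show ?thesis
      proof (cases "j = 0")
        case True thus ?thesis using col0[OF i] i E A3 ii by (auto simp: E_def)
      next
        case False
        then obtain j' where jj: "j = Suc j'" by (cases j, auto)
        show ?thesis using i j ii jj E A3 by (auto simp: A3_def)
      qed
    qed
  qed (insert A' E A3, auto)
  define P where "P = four_block_mat (1\<^sub>m 1) (0\<^sub>m 1 k) (0\<^sub>m k 1) U3"
  have P: "P \<in> carrier_mat (Suc k) (Suc k)" unfolding P_def using U3 by auto
  have Pa: "mat_adjoint P = four_block_mat (1\<^sub>m 1) (0\<^sub>m 1 k) (0\<^sub>m k 1) (mat_adjoint U3)"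
    unfolding P_def using adj_four_block_diag[of "1\<^sub>m 1" 1 U3 k] U3 by simp
  have PP: "mat_adjoint P * P = 1\<^sub>m (Suc k)"
    unfolding Pa unfolding P_def
    by (subst mult_four_block_mat[of _ 1 1 _ k _ k _ _ 1 _ k], insert U3, auto simp: U3U3)
  have Dk: "diagm es3 \<in> carrier_mat k k" using les3 diagm_carrier[of es3] by simp
  define D where "D = four_block_mat E (0\<^sub>m 1 k) (0\<^sub>m k 1) (diagm es3)"
  have D: "D \<in> carrier_mat (Suc k) (Suc k)" unfolding D_def
    using four_block_carrier_mat[OF E, of "diagm es3" k k] les3 by auto
  have Dd: "D = diagm (e # es3)"
    unfolding D_def diagm_def E_def using les3
    by (intro eq_matI, auto simp: nth_Cons split: nat.splits)
  have A'P: "A' = P * D * mat_adjoint P"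
  proof -
    have "P * D = four_block_mat E (0\<^sub>m 1 k) (0\<^sub>m k 1) (U3 * diagm es3)"
      unfolding P_def D_def
      by (subst mult_four_block_mat[of _ 1 1 _ k _ k _ _ 1 _ k], insert U3 E Dk, auto)
    also have "\<dots> * mat_adjoint P = four_block_mat E (0\<^sub>m 1 k) (0\<^sub>m k 1) (U3 * diagm es3 * mat_adjoint U3)"
      unfolding Pa
      by (subst mult_four_block_mat[of _ 1 1 _ k _ k _ _ 1 _ k], insert U3 E Dk, auto)
    finally show ?thesis unfolding A'b A3d by simp
  qed
  define U where "U = W * P"
  have U: "U \<in> carrier_mat (Suc k) (Suc k)" unfolding U_def using W P by auto
  have "mat_adjoint U * U = 1\<^sub>m (Suc k)"
  proof -
    have Pa': "mat_adjoint P \<in> carrier_mat (Suc k) (Suc k)" using P by auto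
    have WP: "W * P \<in> carrier_mat (Suc k) (Suc k)" using W P by auto
    have "mat_adjoint U * U = (mat_adjoint P * mat_adjoint W) * (W * P)"
      unfolding U_def adj_mult[OF W P] ..
    also have "\<dots> = mat_adjoint P * (mat_adjoint W * (W * P))"
      by (rule assoc_mult_mat[OF Pa' Wa WP])
    also have "mat_adjoint W * (W * P) = (mat_adjoint W * W) * P"
      by (rule assoc_mult_mat[OF Wa W P, symmetric])
    also have "\<dots> = P" unfolding WW using P by simp
    finally show ?thesis using PP by simp
  qed
  hence uU: "unitary U (Suc k)" using U unfolding unitary_def by auto
  have "H = W * A' * mat_adjoint W"
  proof -
    have HW: "H * W \<in> carrier_mat (Suc k) (Suc k)" using H W by auto
    have "W * A' = (W * mat_adjoint W) * (H * W)" unfolding A'_def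
      by (rule assoc_mult_mat[OF W Wa HW, symmetric])
    also have "\<dots> = H * W" unfolding WW' by (rule left_mult_one_mat[OF HW])
    finally have "W * A' * mat_adjoint W = H * W * mat_adjoint W" by simp
    also have "\<dots> = H * (W * mat_adjoint W)" by (rule assoc_mult_mat[OF H W Wa])
    finally show ?thesis unfolding WW' using right_mult_one_mat[OF H] by simp
  qed
  also have "\<dots> = U * D * mat_adjoint U"
  proof -
    have Pa': "mat_adjoint P \<in> carrier_mat (Suc k) (Suc k)" using P by auto
    have PD: "P * D \<in> carrier_mat (Suc k) (Suc k)" using P D by auto
    have "W * (P * D * mat_adjoint P) = W * (P * D) * mat_adjoint P"
      by (rule assoc_mult_mat[OF W PD Pa', symmetric])
    also have "W * (P * D) = (W * P) * D" by (rule assoc_mult_mat[OF W P D, symmetric])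
    finally have 1: "W * (P * D * mat_adjoint P) = W * P * D * mat_adjoint P" .
    have WPD: "W * P * D \<in> carrier_mat (Suc k) (Suc k)" using W P D by auto
    have "U * D * mat_adjoint U = W * P * D * (mat_adjoint P * mat_adjoint W)"
      unfolding U_def adj_mult[OF W P] ..
    also have "\<dots> = W * P * D * mat_adjoint P * mat_adjoint W"
      by (rule assoc_mult_mat[OF WPD Pa' Wa, symmetric])
    finally show ?thesis unfolding A'P 1 by simp
  qed
  finally have "H = U * diagm (e # es3) * mat_adjoint U" unfolding Dd .
  thus ?case using uU les3 by (intro exI[of _ U] exI[of _ "e # es3"], auto)
qed


lemma cip_sum: "x \<bullet>c y = (\<Sum>i<dim_vec y. x $ i * cnj (y $ i))"
  unfolding scalar_prod_def by (simp add: atLeast0LessThan)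

lemma cip_conj: fixes x y :: "complex vec"
  assumes "x \<in> carrier_vec n" "y \<in> carrier_vec n"
  shows "y \<bullet>c x = cnj (x \<bullet>c y)"
  using assms unfolding cip_sum by (auto simp: mult.commute intro!: sum.cong)

lemma cip_expand: fixes x y :: "complex vec"
  assumes "x \<in> carrier_vec n" "y \<in> carrier_vec n"
  shows "(x + b \<cdot>\<^sub>v y) \<bullet>c (x + b \<cdot>\<^sub>v y)
    = x \<bullet>c x + cnj b * (x \<bullet>c y) + b * (y \<bullet>c x) + b * cnj b * (y \<bullet>c y)"
  using assms unfolding cip_sum
  by (auto simp: sum.distrib sum_distrib_left algebra_simps intro!: sum.cong)

lemma cip_add_left: fixes x y z :: "complex vec"
  assumes "x \<in> carrier_vec n" "y \<in> carrier_vec n" "z \<in> carrier_vec n"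
  shows "(x + y) \<bullet>c z = x \<bullet>c z + y \<bullet>c z"
  using assms unfolding cip_sum by (auto simp: sum.distrib algebra_simps)

lemma cip_add_right: fixes x y z :: "complex vec"
  assumes "x \<in> carrier_vec n" "y \<in> carrier_vec n" "z \<in> carrier_vec n"
  shows "z \<bullet>c (x + y) = z \<bullet>c x + z \<bullet>c y"
  using assms unfolding cip_sum by (auto simp: sum.distrib algebra_simps)

lemma cip_smult_left: fixes x y :: "complex vec"
  assumes "x \<in> carrier_vec n" "y \<in> carrier_vec n"
  shows "(a \<cdot>\<^sub>v x) \<bullet>c y = a * (x \<bullet>c y)"
  using assms unfolding cip_sum by (auto simp: sum_distrib_left algebra_simps)

lemma cip_smult_right: fixes x y :: "complex vec"
  assumes "x \<in> carrier_vec n" "y \<in> carrier_vec n"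
  shows "x \<bullet>c (a \<cdot>\<^sub>v y) = cnj a * (x \<bullet>c y)"
  using assms unfolding cip_sum by (auto simp: sum_distrib_left algebra_simps)

lemma cip_self_re: fixes x :: "complex vec"
  shows "x \<bullet>c x = of_real (Re (x \<bullet>c x))" "Re (x \<bullet>c x) \<ge> 0"
  unfolding cprod_self_real by (auto intro: sum_nonneg)

lemma mat_vec_adj: fixes A :: "complex mat"
  assumes A: "A \<in> carrier_mat p q" and x: "x \<in> carrier_vec q" and y: "y \<in> carrier_vec p"
  shows "(A *\<^sub>v x) \<bullet>c y = x \<bullet>c (mat_adjoint A *\<^sub>v y)"
proof -
  have "(A *\<^sub>v x) \<bullet>c y = (\<Sum>i<p. (\<Sum>j<q. A $$ (i,j) * x $ j) * cnj (y $ i))"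
    using assms unfolding cip_sum by (auto simp: scalar_prod_def atLeast0LessThan intro!: sum.cong)
  also have "\<dots> = (\<Sum>i<p. \<Sum>j<q. A $$ (i,j) * x $ j * cnj (y $ i))"
    by (simp add: sum_distrib_right)
  also have "\<dots> = (\<Sum>j<q. \<Sum>i<p. A $$ (i,j) * x $ j * cnj (y $ i))"
    by (rule sum.swap)
  also have "\<dots> = (\<Sum>j<q. x $ j * cnj (\<Sum>i<p. cnj (A $$ (i,j)) * y $ i))"
    by (auto simp: sum_distrib_left algebra_simps intro!: sum.cong)
  also have "\<dots> = x \<bullet>c (mat_adjoint A *\<^sub>v y)"
    using assms unfolding cip_sum by (auto simp: scalar_prod_def atLeast0LessThan intro!: sum.cong)
  finally show ?thesis .
qed

lemma cauchy_schwarz_c: fixes x y :: "complex vec"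
  assumes x: "x \<in> carrier_vec n" and y: "y \<in> carrier_vec n"
  shows "(cmod (x \<bullet>c y))\<^sup>2 \<le> Re (x \<bullet>c x) * Re (y \<bullet>c y)"
proof (cases "y = 0\<^sub>v n")
  case True thus ?thesis using x unfolding cip_sum by auto
next
  case False
  define t where "t = Re (y \<bullet>c y)"
  have yy: "y \<bullet>c y = of_real t" unfolding t_def using cip_self_re(1) .
  have tpos: "t > 0"
  proof -
    have "y \<bullet>c y \<noteq> 0" using conjugate_square_eq_0_vec[OF y] False by auto
    thus ?thesis using cip_self_re(2)[of y] yy unfolding t_def by (auto simp: less_le)
  qed
  define a where "a = x \<bullet>c y"
  define b where "b = - a / of_real t"
  have yx: "y \<bullet>c x = cnj a" unfolding a_def using cip_conj[OF x y] .
  have e1: "(x + b \<cdot>\<^sub>v y) \<bullet>c (x + b \<cdot>\<^sub>v y) = x \<bullet>c x + (cnj b * a + b * cnj a + b * cnj b * of_real t)"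
    unfolding cip_expand[OF x y] a_def[symmetric] yx yy by simp
  have e2: "cnj b * a + b * cnj a + b * cnj b * of_real t = - of_real ((cmod a)\<^sup>2 / t)"
  proof -
    have "a * cnj a = of_real ((cmod a)\<^sup>2)" by (simp add: mult_cnj_cmod)
    thus ?thesis unfolding b_def using tpos
      by (simp add: field_simps power2_eq_square)
  qed
  have "0 \<le> Re ((x + b \<cdot>\<^sub>v y) \<bullet>c (x + b \<cdot>\<^sub>v y))" using cip_self_re(2) .
  also have "\<dots> = Re (x \<bullet>c x) - (cmod a)\<^sup>2 / t" unfolding e1 e2 by simp
  finally have "(cmod a)\<^sup>2 / t \<le> Re (x \<bullet>c x)" by simp
  thus ?thesis using tpos unfolding a_def t_def by (simp add: field_simps)
qed


lemma proots_linear_prod: "proots (\<Prod>a\<leftarrow>xs. [:- a, 1:]) = mset (xs :: complex list)"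
proof (induct xs)
  case Nil thus ?case by simp
next
  case (Cons a xs)
  have "proots (\<Prod>a\<leftarrow>a # xs. [:- a, 1:]) = proots ([:- a, 1:] * (\<Prod>a\<leftarrow>xs. [:- a, 1:]))" by simp
  also have "\<dots> = proots [:- a, 1:] + proots (\<Prod>a\<leftarrow>xs. [:- a, 1:])"
    by (rule proots_mult) (auto simp: prod_list_zero_iff)
  also have "\<dots> = {#a#} + mset xs" unfolding Cons proots_linear_factor by simp
  finally show ?case by simp
qed

locale specd =
  fixes Cc :: "complex mat" and U :: "complex mat" and es :: "complex list" and N :: nat
  assumes uU: "unitary U N" and les: "length es = N"
    and Cd: "Cc = U * diagm es * mat_adjoint U"
begin

lemma Ucar: "U \<in> carrier_mat N N" using uU unfolding unitary_def by auto
lemma Uacar: "mat_adjoint U \<in> carrier_mat N N" using adj_carrier[OF Ucar] .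
lemma UU: "mat_adjoint U * U = 1\<^sub>m N" using uU unfolding unitary_def by auto
lemma UUr: "U * mat_adjoint U = 1\<^sub>m N" using unitary_right[OF uU] .
lemma Dcar: "diagm es \<in> carrier_mat N N" unfolding les[symmetric] by (rule diagm_carrier)
lemma diagm_mult: assumes c: "c \<in> carrier_vec N"
  shows "diagm es *\<^sub>v c = vec N (\<lambda>j. es ! j * c $ j)"
proof (rule eq_vecI)
  fix j assume "j < dim_vec (vec N (\<lambda>j. es ! j * c $ j))"
  hence j: "j < N" by auto
  have "(diagm es *\<^sub>v c) $ j = (\<Sum>k\<in>{0..<N}. (if j = k then es ! j else 0) * c $ k)"
    using j c les unfolding diagm_def by (auto simp: scalar_prod_def)
  also have "\<dots> = (\<Sum>k\<in>{0..<N}. if k = j then es ! j * c $ k else 0)"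
    by (rule sum.cong, auto)
  also have "\<dots> = es ! j * c $ j" using j by simp
  finally show "(diagm es *\<^sub>v c) $ j = vec N (\<lambda>j. es ! j * c $ j) $ j" using j by simp
qed (insert Dcar, auto)

lemma Ccar: "Cc \<in> carrier_mat N N" unfolding Cd
  by (rule mult_carrier_mat[OF mult_carrier_mat[OF Ucar Dcar] Uacar])

lemma Cmul: assumes z: "z \<in> carrier_vec N"
  shows "Cc *\<^sub>v z = U *\<^sub>v (diagm es *\<^sub>v (mat_adjoint U *\<^sub>v z))"
proof -
  have UD: "U * diagm es \<in> carrier_mat N N" using Ucar Dcar by auto
  have "Cc *\<^sub>v z = (U * diagm es) *\<^sub>v (mat_adjoint U *\<^sub>v z)"
    unfolding Cd by (rule assoc_mult_mat_vec[OF UD Uacar z])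
  also have "\<dots> = U *\<^sub>v (diagm es *\<^sub>v (mat_adjoint U *\<^sub>v z))"
    by (rule assoc_mult_mat_vec[OF Ucar Dcar], insert Uacar z, auto)
  finally show ?thesis .
qed

lemma UUv: assumes z: "z \<in> carrier_vec N" shows "U *\<^sub>v (mat_adjoint U *\<^sub>v z) = z"
proof -
  have "U *\<^sub>v (mat_adjoint U *\<^sub>v z) = (U * mat_adjoint U) *\<^sub>v z"
    by (rule assoc_mult_mat_vec[OF Ucar Uacar z, symmetric])
  thus ?thesis unfolding UUr using z by simp
qed

lemma parseval: assumes z: "z \<in> carrier_vec N" and w: "w \<in> carrier_vec N"
  shows "(mat_adjoint U *\<^sub>v z) \<bullet>c (mat_adjoint U *\<^sub>v w) = z \<bullet>c w"
proof -
  have "(mat_adjoint U *\<^sub>v z) \<bullet>c (mat_adjoint U *\<^sub>v w) = z \<bullet>c (U *\<^sub>v (mat_adjoint U *\<^sub>v w))"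
    using mat_vec_adj[OF Uacar z, of "mat_adjoint U *\<^sub>v w"] w Uacar by auto
  thus ?thesis unfolding UUv[OF w] .
qed

definition co :: "complex vec \<Rightarrow> complex vec" where "co z = mat_adjoint U *\<^sub>v z"

lemma co_dim[simp]: "dim_vec (co z) = N" unfolding co_def using Uacar by auto

lemma co_car[simp]: "co z \<in> carrier_vec N" by (rule carrier_vecI, rule co_dim)

lemma ip_co: assumes z: "z \<in> carrier_vec N" and w: "w \<in> carrier_vec N"
  shows "z \<bullet>c w = (\<Sum>j<N. co z $ j * cnj (co w $ j))"
  using parseval[OF z w] unfolding co_def[symmetric] cip_sum using z w by (simp add: co_car[unfolded carrier_vec_def])

lemma quad_co: assumes z: "z \<in> carrier_vec N" and w: "w \<in> carrier_vec N"
  shows "(Cc *\<^sub>v z) \<bullet>c w = (\<Sum>j<N. es ! j * co z $ j * cnj (co w $ j))"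
proof -
  have dz: "diagm es *\<^sub>v co z \<in> carrier_vec N" using Dcar by auto
  have "(Cc *\<^sub>v z) \<bullet>c w = (U *\<^sub>v (diagm es *\<^sub>v co z)) \<bullet>c w"
    unfolding Cmul[OF z] co_def ..
  also have "\<dots> = (diagm es *\<^sub>v co z) \<bullet>c (mat_adjoint U *\<^sub>v w)"
    by (rule mat_vec_adj[OF Ucar dz w])
  also have "\<dots> = (diagm es *\<^sub>v co z) \<bullet>c co w" unfolding co_def ..
  also have "\<dots> = (\<Sum>j<N. es ! j * co z $ j * cnj (co w $ j))"
    unfolding cip_sum diagm_mult[OF co_car] by (auto intro!: sum.cong)
  finally show ?thesis .
qed

lemma co_col: assumes j: "j < N" shows "co (col U j) = unit_vec N j"
proof -
  have "co (col U j) = col (mat_adjoint U * U) j" unfolding co_def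
    using col_mult2[OF Uacar Ucar j] by simp
  thus ?thesis unfolding UU using col_one[OF j] by simp
qed

lemma U_unit: assumes j: "j < N" shows "U *\<^sub>v unit_vec N j = col U j"
proof (rule eq_vecI)
  fix i assume "i < dim_vec (col U j)"
  hence i: "i < N" using Ucar by auto
  have "(U *\<^sub>v unit_vec N j) $ i = row U i \<bullet> unit_vec N j" using i Ucar by auto
  also have "\<dots> = row U i $ j" using j by (rule scalar_prod_right_unit)
  finally show "(U *\<^sub>v unit_vec N j) $ i = col U j $ i" using i j Ucar by auto
qed (insert Ucar, auto)

lemma eigen_col: assumes j: "j < N" shows "Cc *\<^sub>v col U j = es ! j \<cdot>\<^sub>v col U j"
proof -
  have "diagm es *\<^sub>v unit_vec N j = es ! j \<cdot>\<^sub>v unit_vec N j"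
    unfolding diagm_mult[OF unit_vec_carrier] by (rule eq_vecI, insert j, auto simp: unit_vec_def)
  hence "Cc *\<^sub>v col U j = U *\<^sub>v (es ! j \<cdot>\<^sub>v unit_vec N j)"
    unfolding Cmul[OF col_dim[of U j, unfolded carrier_matD(1)[OF Ucar]]] co_def[symmetric] co_col[OF j] by simp
  also have "\<dots> = es ! j \<cdot>\<^sub>v col U j" using mult_mat_vec[OF Ucar, of "unit_vec N j"] U_unit[OF j] by simp
  finally show ?thesis .
qed

lemma col_orth: assumes j: "j < N" and k: "k < N"
  shows "col U j \<bullet>c col U k = (if j = k then 1 else 0)"
proof -
  have cj: "col U j \<in> carrier_vec N" and ck: "col U k \<in> carrier_vec N" using col_dim[of U j, unfolded carrier_matD(1)[OF Ucar]] col_dim[of U k, unfolded carrier_matD(1)[OF Ucar]] by auto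
  have "col U j \<bullet>c col U k = co (col U j) \<bullet>c co (col U k)" unfolding co_def
    using parseval[OF cj ck] by simp
  also have "\<dots> = (\<Sum>i<N. unit_vec N j $ i * cnj (unit_vec N k $ i))"
    unfolding co_col[OF j] co_col[OF k] cip_sum by simp
  also have "\<dots> = (\<Sum>i<N. if i = j then (if j = k then 1 else 0) else 0)"
    by (rule sum.cong, auto simp: unit_vec_def)
  also have "\<dots> = (if j = k then 1 else 0)" using j by simp
  finally show ?thesis .
qed

lemma char_poly_Cc: "char_poly Cc = (\<Prod>a\<leftarrow>es. [:- a, 1:])"
proof -
  have "similar_mat Cc (diagm es)"
    by (rule similar_matI[of Cc "diagm es" U "mat_adjoint U" N], insert Ccar Dcar Ucar Uacar UU UUr, simp_all add: Cd[symmetric])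
  hence "char_poly Cc = char_poly (diagm es)" by (rule char_poly_similar)
  also have "\<dots> = (\<Prod>a\<leftarrow>diag_mat (diagm es). [:- a, 1:])"
    by (rule char_poly_upper_triangular[OF Dcar], auto simp: diagm_def)
  also have "diag_mat (diagm es) = es"
    unfolding diag_mat_def diagm_def by (auto intro: nth_equalityI)
  finally show ?thesis .
qed

lemma proots_Cc: "proots (char_poly Cc) = mset es"
  unfolding char_poly_Cc by (rule proots_linear_prod)

end


definition nn :: "complex vec \<Rightarrow> real" where "nn z = Re (z \<bullet>c z)"

lemma nn_nonneg: "nn z \<ge> 0" unfolding nn_def using cip_self_re(2) .
lemma nn_of: "z \<bullet>c z = of_real (nn z)" unfolding nn_def using cip_self_re(1) .

lemma nn_zero: assumes "z \<in> carrier_vec n" shows "nn z = 0 \<longleftrightarrow> z = 0\<^sub>v n"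
proof -
  have "nn z = 0 \<longleftrightarrow> z \<bullet>c z = 0" using nn_of[of z] by (metis of_real_0 of_real_eq_iff)
  thus ?thesis using conjugate_square_eq_0_vec[OF assms] by simp
qed

lemma nn_smult: assumes "z \<in> carrier_vec n" shows "nn (a \<cdot>\<^sub>v z) = (cmod a)\<^sup>2 * nn z"
proof -
  have "(a \<cdot>\<^sub>v z) \<bullet>c (a \<cdot>\<^sub>v z) = a * cnj a * (z \<bullet>c z)"
    using cprod_smult[OF assms assms] .
  also have "\<dots> = of_real ((cmod a)\<^sup>2 * nn z)" unfolding nn_of mult_cnj_cmod by simp
  finally show ?thesis unfolding nn_def by simp
qed

definition realv :: "complex vec \<Rightarrow> bool" where "realv z \<longleftrightarrow> (\<forall>i<dim_vec z. Im (z $ i) = 0)"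
definition realm :: "complex mat \<Rightarrow> bool" where
  "realm A \<longleftrightarrow> (\<forall>i<dim_row A. \<forall>j<dim_col A. Im (A $$ (i,j)) = 0)"

definition reV :: "complex vec \<Rightarrow> complex vec" where "reV w = vec (dim_vec w) (\<lambda>i. of_real (Re (w $ i)))"
definition imV :: "complex vec \<Rightarrow> complex vec" where "imV w = vec (dim_vec w) (\<lambda>i. of_real (Im (w $ i)))"

lemma reV_car[simp]: "w \<in> carrier_vec n \<Longrightarrow> reV w \<in> carrier_vec n" unfolding reV_def carrier_vec_def by auto
lemma imV_car[simp]: "w \<in> carrier_vec n \<Longrightarrow> imV w \<in> carrier_vec n" unfolding imV_def carrier_vec_def by auto
lemma reV_real: "realv (reV w)" unfolding realv_def reV_def by auto
lemma imV_real: "realv (imV w)" unfolding realv_def imV_def by auto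

lemma re_im_decomp: "w = reV w + \<i> \<cdot>\<^sub>v imV w"
  by (rule eq_vecI, auto simp: reV_def imV_def complex_eq_iff)

lemma realm_mult_re: assumes A: "A \<in> carrier_mat p q" "realm A" and w: "w \<in> carrier_vec q"
  shows "A *\<^sub>v reV w = reV (A *\<^sub>v w)" "A *\<^sub>v imV w = imV (A *\<^sub>v w)"
proof -
  have Ar: "i < p \<Longrightarrow> j < q \<Longrightarrow> A $$ (i,j) = of_real (Re (A $$ (i,j)))" for i j
    using A unfolding realm_def by (auto simp: complex_eq_iff)
  show "A *\<^sub>v reV w = reV (A *\<^sub>v w)"
  proof (rule eq_vecI)
    fix i assume "i < dim_vec (reV (A *\<^sub>v w))"
    hence i: "i < p" using A unfolding reV_def by auto
    have "(A *\<^sub>v reV w) $ i = (\<Sum>j\<in>{0..<q}. A $$ (i,j) * of_real (Re (w $ j)))"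
      using i A w unfolding reV_def by (auto simp: scalar_prod_def)
    also have "\<dots> = (\<Sum>j\<in>{0..<q}. of_real (Re (A $$ (i,j) * w $ j)))"
      by (rule sum.cong, simp, subst (1 2) Ar[OF i], auto)
    also have "\<dots> = reV (A *\<^sub>v w) $ i"
      using i A w unfolding reV_def by (auto simp: scalar_prod_def Re_sum)
    finally show "(A *\<^sub>v reV w) $ i = reV (A *\<^sub>v w) $ i" .
  qed (insert A, auto simp: reV_def)
  show "A *\<^sub>v imV w = imV (A *\<^sub>v w)"
  proof (rule eq_vecI)
    fix i assume "i < dim_vec (imV (A *\<^sub>v w))"
    hence i: "i < p" using A unfolding imV_def by auto
    have "(A *\<^sub>v imV w) $ i = (\<Sum>j\<in>{0..<q}. A $$ (i,j) * of_real (Im (w $ j)))"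
      using i A w unfolding imV_def by (auto simp: scalar_prod_def)
    also have "\<dots> = (\<Sum>j\<in>{0..<q}. of_real (Im (A $$ (i,j) * w $ j)))"
      by (rule sum.cong, simp, subst (1 2) Ar[OF i], auto)
    also have "\<dots> = imV (A *\<^sub>v w) $ i"
      using i A w unfolding imV_def by (auto simp: scalar_prod_def Im_sum)
    finally show "(A *\<^sub>v imV w) $ i = imV (A *\<^sub>v w) $ i" .
  qed (insert A, auto simp: imV_def)
qed

lemma reV_ip: assumes w: "w \<in> carrier_vec n" and g: "g \<in> carrier_vec n" "realv g"
  shows "reV w \<bullet>c g = of_real (Re (w \<bullet>c g))" "imV w \<bullet>c g = of_real (Im (w \<bullet>c g))"
proof -
  have gr: "i < n \<Longrightarrow> Im (g $ i) = 0" for i using g unfolding realv_def by auto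
  have e1: "Im b = 0 \<Longrightarrow> complex_of_real (Re a) * cnj b = of_real (Re (a * cnj b))" for a b
    by (simp add: complex_eq_iff)
  have e2: "Im b = 0 \<Longrightarrow> complex_of_real (Im a) * cnj b = of_real (Im (a * cnj b))" for a b
    by (simp add: complex_eq_iff)
  show "reV w \<bullet>c g = of_real (Re (w \<bullet>c g))"
    using w g unfolding cip_sum reV_def Re_sum of_real_sum
    by (auto intro!: sum.cong simp: e1 gr)
  show "imV w \<bullet>c g = of_real (Im (w \<bullet>c g))"
    using w g unfolding cip_sum imV_def Im_sum of_real_sum
    by (auto intro!: sum.cong simp: e2 gr)
qed


locale core = specd Cc U es N for Cc U es N +
  fixes Mc :: "complex mat" and p :: nat and g :: "complex vec"
  assumes Mc: "Mc \<in> carrier_mat p N" and Mr: "realm Mc"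
    and CcM: "Cc = mat_adjoint Mc * Mc"
    and g: "g \<in> carrier_vec p" and gr: "realv g" and g1: "g \<bullet>c g = 1"
    and H1: "\<And>z. z \<in> carrier_vec p \<Longrightarrow> nn (mat_adjoint Mc *\<^sub>v z) \<le> nn z"
    and H2: "nn (mat_adjoint Mc *\<^sub>v g) = 1"
begin

abbreviation "Mt \<equiv> mat_adjoint Mc"
abbreviation "K \<equiv> Mc * Mt"

lemma Mtc: "Mt \<in> carrier_mat N p" using adj_carrier[OF Mc] .
lemma Kc: "K \<in> carrier_mat p p" using mult_carrier_mat[OF Mc Mtc] .

lemma Mt_adj: "x \<in> carrier_vec p \<Longrightarrow> y \<in> carrier_vec N \<Longrightarrow> (Mt *\<^sub>v x) \<bullet>c y = x \<bullet>c (Mc *\<^sub>v y)"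
  using mat_vec_adj[OF Mtc] by simp
lemma Mc_adj: "x \<in> carrier_vec N \<Longrightarrow> y \<in> carrier_vec p \<Longrightarrow> (Mc *\<^sub>v x) \<bullet>c y = x \<bullet>c (Mt *\<^sub>v y)"
  using mat_vec_adj[OF Mc] by simp

lemma Mcv[simp]: "x \<in> carrier_vec N \<Longrightarrow> Mc *\<^sub>v x \<in> carrier_vec p" using Mc by auto
lemma Mtv[simp]: "x \<in> carrier_vec p \<Longrightarrow> Mt *\<^sub>v x \<in> carrier_vec N" using Mtc by auto

lemma Cv: "z \<in> carrier_vec N \<Longrightarrow> Cc *\<^sub>v z = Mt *\<^sub>v (Mc *\<^sub>v z)"
  unfolding CcM using assoc_mult_mat_vec[OF Mtc Mc] by simp
lemma Kv: "z \<in> carrier_vec p \<Longrightarrow> K *\<^sub>v z = Mc *\<^sub>v (Mt *\<^sub>v z)"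
  using assoc_mult_mat_vec[OF Mc Mtc] by simp

lemma K_herm: assumes x: "x \<in> carrier_vec p" and y: "y \<in> carrier_vec p"
  shows "(K *\<^sub>v x) \<bullet>c y = x \<bullet>c (K *\<^sub>v y)"
  unfolding Kv[OF x] Kv[OF y] using Mc_adj[of "Mt *\<^sub>v x" y] Mt_adj[of x "Mt *\<^sub>v y"] x y by simp

lemma K_realm: "realm K"
proof -
  have r: "i < p \<Longrightarrow> j < N \<Longrightarrow> Im (Mc $$ (i,j)) = 0" for i j using Mr Mc unfolding realm_def by auto
  show ?thesis unfolding realm_def
  proof (intro allI impI)
    fix i j assume "i < dim_row K" "j < dim_col K"
    hence i: "i < p" and j: "j < p" using Kc by auto
    have "K $$ (i,j) = (\<Sum>k\<in>{0..<N}. Mc $$ (i,k) * cnj (Mc $$ (j,k)))"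
      using i j Mc Mtc by (auto simp: scalar_prod_def)
    hence "Im (K $$ (i,j)) = (\<Sum>k\<in>{0..<N}. Im (Mc $$ (i,k) * cnj (Mc $$ (j,k))))" by (simp add: Im_sum)
    also have "\<dots> = 0" using r i j by (auto intro!: sum.neutral)
    finally show "Im (K $$ (i,j)) = 0" .
  qed
qed

definition ev :: "nat \<Rightarrow> real" where "ev j = Re (es ! j)"

lemma colU[simp]: "j < N \<Longrightarrow> col U j \<in> carrier_vec N"
  using col_dim[of U j, unfolded carrier_matD(1)[OF Ucar]] .

lemma es_nn: assumes j: "j < N" shows "es ! j = of_real (nn (Mc *\<^sub>v col U j))"
proof -
  let ?q = "col U j"
  have "(Cc *\<^sub>v ?q) \<bullet>c ?q = es ! j * (?q \<bullet>c ?q)"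
    unfolding eigen_col[OF j] by (rule cip_smult_left[of _ N], insert j, auto)
  also have "?q \<bullet>c ?q = 1" using col_orth[OF j j] by simp
  finally have 1: "(Cc *\<^sub>v ?q) \<bullet>c ?q = es ! j" by simp
  have "(Cc *\<^sub>v ?q) \<bullet>c ?q = (Mc *\<^sub>v ?q) \<bullet>c (Mc *\<^sub>v ?q)"
    unfolding Cv[OF colU[OF j]] by (rule Mt_adj, insert j, auto)
  with 1 show ?thesis using nn_of by simp
qed

lemma es_of: "j < N \<Longrightarrow> es ! j = of_real (ev j)"
  unfolding ev_def using es_nn by simp

lemma ev_ge0: "j < N \<Longrightarrow> ev j \<ge> 0"
  unfolding ev_def using es_nn nn_nonneg by simp

lemma ev_le1: assumes j: "j < N" shows "ev j \<le> 1"
proof -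
  let ?q = "col U j"
  let ?w = "Mc *\<^sub>v ?q"
  have "Mt *\<^sub>v ?w = Cc *\<^sub>v ?q" using Cv[OF colU[OF j]] by simp
  also have "\<dots> = of_real (ev j) \<cdot>\<^sub>v ?q" using eigen_col[OF j] es_of[OF j] by simp
  finally have "nn (Mt *\<^sub>v ?w) = (cmod (of_real (ev j)))\<^sup>2 * nn ?q"
    using nn_smult[OF colU[OF j]] by simp
  also have "nn ?q = 1" unfolding nn_def using col_orth[OF j j] by simp
  finally have "nn (Mt *\<^sub>v ?w) = (ev j)\<^sup>2" by simp
  moreover have "nn (Mt *\<^sub>v ?w) \<le> nn ?w" using H1 j by simp
  moreover have "nn ?w = ev j" unfolding ev_def using es_nn[OF j] by simp
  ultimately have "(ev j)\<^sup>2 \<le> ev j" by simp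
  hence sq: "ev j * ev j \<le> ev j" by (simp add: power2_eq_square)
  show ?thesis
  proof (rule ccontr)
    assume "\<not> ev j \<le> 1" hence "ev j > 1" by simp
    hence "ev j * 1 < ev j * ev j" by (intro mult_strict_left_mono) auto
    with sq show False by simp
  qed
qed

lemma nn_co: "z \<in> carrier_vec N \<Longrightarrow> nn z = (\<Sum>j<N. (cmod (co z $ j))\<^sup>2)"
  unfolding nn_def using ip_co[of z z] by (simp add: Re_sum mult_cnj_cmod flip: of_real_power)

lemma quad_nn: assumes z: "z \<in> carrier_vec N"
  shows "nn (Mc *\<^sub>v z) = (\<Sum>j<N. ev j * (cmod (co z $ j))\<^sup>2)"
proof -
  have "(Mc *\<^sub>v z) \<bullet>c (Mc *\<^sub>v z) = (Cc *\<^sub>v z) \<bullet>c z"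
    unfolding Cv[OF z] by (rule Mt_adj[symmetric], insert z, auto)
  also have "\<dots> = (\<Sum>j<N. es ! j * co z $ j * cnj (co z $ j))" using quad_co[OF z z] .
  also have "\<dots> = (\<Sum>j<N. of_real (ev j * (cmod (co z $ j))\<^sup>2))"
    by (rule sum.cong, simp, subst es_of, auto simp: mult_cnj_cmod mult.assoc)
  finally show ?thesis unfolding nn_def by (simp add: Re_sum)
qed

lemma Mc_contr: assumes z: "z \<in> carrier_vec N" shows "nn (Mc *\<^sub>v z) \<le> nn z"
  unfolding quad_nn[OF z] nn_co[OF z]
  by (rule sum_mono, rule mult_left_le_one_le, auto simp: ev_le1 ev_ge0)

end


lemma reV_smult: "reV (complex_of_real m \<cdot>\<^sub>v w) = complex_of_real m \<cdot>\<^sub>v reV w"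
  by (rule eq_vecI, auto simp: reV_def)
lemma imV_smult: "imV (complex_of_real m \<cdot>\<^sub>v w) = complex_of_real m \<cdot>\<^sub>v imV w"
  by (rule eq_vecI, auto simp: imV_def)

lemma add_smult_zero: fixes x y :: "complex vec"
  assumes "x \<in> carrier_vec n" "y \<in> carrier_vec n" "x + c \<cdot>\<^sub>v y = 0\<^sub>v n"
  shows "x = (- c) \<cdot>\<^sub>v y"
proof (rule eq_vecI)
  fix i assume "i < dim_vec ((- c) \<cdot>\<^sub>v y)"
  hence i: "i < n" using assms by auto
  have "(x + c \<cdot>\<^sub>v y) $ i = 0" using assms(3) i by simp
  hence e: "x $ i + c * y $ i = 0" using i assms(1,2) by simp
  hence "c * y $ i = - x $ i" using add_eq_0_iff by blast
  thus "x $ i = ((- c) \<cdot>\<^sub>v y) $ i" using i assms(1,2) by simp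
qed (insert assms, auto)

context core begin

lemma K_lin: assumes x: "x \<in> carrier_vec p" and y: "y \<in> carrier_vec p"
  shows "K *\<^sub>v (x + c \<cdot>\<^sub>v y) = K *\<^sub>v x + c \<cdot>\<^sub>v (K *\<^sub>v y)"
  using mult_add_distrib_mat_vec[OF Kc x, of "c \<cdot>\<^sub>v y"] mult_mat_vec[OF Kc y] y by simp

lemma Kg: "K *\<^sub>v g = g"
proof -
  define a where "a = Mt *\<^sub>v g"
  have a: "a \<in> carrier_vec N" unfolding a_def using g by simp
  define x where "x = K *\<^sub>v g"
  have x: "x \<in> carrier_vec p" unfolding x_def using Kc g by auto
  have xa: "x = Mc *\<^sub>v a" unfolding x_def a_def using Kv[OF g] .
  have xg: "x \<bullet>c g = 1" unfolding xa using Mc_adj[OF a g] nn_of[of a] H2 unfolding a_def by simp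
  have gx: "g \<bullet>c x = 1" using cip_conj[OF x g] xg by simp
  have nx: "nn x \<le> 1" unfolding xa using Mc_contr[OF a] H2 unfolding a_def by simp
  have "(x + (-1) \<cdot>\<^sub>v g) \<bullet>c (x + (-1) \<cdot>\<^sub>v g) = x \<bullet>c x + cnj (-1) * (x \<bullet>c g) + (-1) * (g \<bullet>c x) + (-1) * cnj (-1) * (g \<bullet>c g)"
    by (rule cip_expand[OF x g])
  also have "\<dots> = of_real (nn x - 1)" unfolding xg gx g1 by (simp add: nn_of)
  finally have "nn (x + (-1) \<cdot>\<^sub>v g) = nn x - 1" unfolding nn_def by simp
  with nx nn_nonneg[of "x + (-1) \<cdot>\<^sub>v g"] have "nn (x + (-1) \<cdot>\<^sub>v g) = 0" by linarith
  hence "x + (-1) \<cdot>\<^sub>v g = 0\<^sub>v p" using nn_zero[of _ p] x g by simp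
  from add_smult_zero[OF x g this] show ?thesis unfolding x_def using g by simp
qed

definition hh where "hh = Mt *\<^sub>v g"

lemma hh: "hh \<in> carrier_vec N" unfolding hh_def using g by simp
lemma hh_nn: "nn hh = 1" unfolding hh_def using H2 .
lemma C_hh: "Cc *\<^sub>v hh = hh"
  unfolding Cv[OF hh] unfolding hh_def Kv[OF g, symmetric] Kg ..

lemma co_C: assumes z: "z \<in> carrier_vec N" and j: "j < N"
  shows "co (Cc *\<^sub>v z) $ j = es ! j * co z $ j"
proof -
  have d: "diagm es *\<^sub>v co z \<in> carrier_vec N" using Dcar by auto
  have "co (Cc *\<^sub>v z) = mat_adjoint U *\<^sub>v (U *\<^sub>v (diagm es *\<^sub>v co z))"
    unfolding co_def Cmul[OF z] ..
  also have "\<dots> = (mat_adjoint U * U) *\<^sub>v (diagm es *\<^sub>v co z)"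
    by (rule assoc_mult_mat_vec[OF Uacar Ucar d, symmetric])
  also have "\<dots> = diagm es *\<^sub>v co z" unfolding UU using d by simp
  finally show ?thesis unfolding diagm_mult[OF co_car] using j by simp
qed

lemma co_hh: "j < N \<Longrightarrow> co hh $ j = es ! j * co hh $ j"
  using co_C[OF hh] C_hh by simp

lemma j0_ex: "\<exists>j0<N. es ! j0 = 1"
proof (rule ccontr)
  assume "\<not> ?thesis"
  hence "\<forall>j<N. co hh $ j = 0" using co_hh by (metis mult_cancel_right2)
  hence "nn hh = 0" unfolding nn_co[OF hh] by simp
  thus False using hh_nn by simp
qed

lemma upper:
  assumes j0: "j0 < N" "es ! j0 = 1" and j1: "j1 < N" "j1 \<noteq> j0"
    and hm: "\<forall>j<N. j \<noteq> j0 \<longrightarrow> ev j \<le> ev j1"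
    and u: "u \<in> carrier_vec p" "u \<bullet>c g = 0" "nn u = 1"
  shows "nn (Mt *\<^sub>v u) \<le> ev j1"
proof (cases "ev j1 \<ge> 1")
  case True thus ?thesis using H1[OF u(1)] u(3) by simp
next
  case False
  define m where "m = ev j1"
  have m1: "m < 1" using False unfolding m_def by simp
  have m0: "m \<ge> 0" unfolding m_def using ev_ge0[OF j1(1)] .
  have ch0: "co hh $ j = 0" if j: "j < N" "j \<noteq> j0" for j
  proof -
    have "ev j < 1" using hm j m1 unfolding m_def by force
    hence "es ! j \<noteq> 1" using es_of[OF j(1)] by auto
    thus ?thesis using co_hh[OF j(1)] by (metis mult_cancel_right2)
  qed
  have sum1: "(\<Sum>j<N. f j) = f j0" if "\<And>j. j < N \<Longrightarrow> j \<noteq> j0 \<Longrightarrow> f j = 0" for f :: "nat \<Rightarrow> 'a :: comm_monoid_add"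
  proof -
    have "(\<Sum>j<N. f j) = (\<Sum>j\<in>{j0}. f j)" by (rule sum.mono_neutral_right, insert j0 that, auto)
    thus ?thesis by simp
  qed
  have chj0: "co hh $ j0 \<noteq> 0"
  proof
    assume "co hh $ j0 = 0"
    hence "nn hh = 0" unfolding nn_co[OF hh] by (subst sum1, insert ch0, auto)
    thus False using hh_nn by simp
  qed
  define y where "y = Mt *\<^sub>v u"
  have y: "y \<in> carrier_vec N" unfolding y_def using u by simp
  have "y \<bullet>c hh = u \<bullet>c (K *\<^sub>v g)" unfolding y_def hh_def Kv[OF g]
    by (rule Mt_adj, insert u g, auto)
  hence "y \<bullet>c hh = 0" unfolding Kg using u by simp
  moreover have "y \<bullet>c hh = co y $ j0 * cnj (co hh $ j0)"
    unfolding ip_co[OF y hh] by (rule sum1, insert ch0, auto)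
  ultimately have cy0: "co y $ j0 = 0" using chj0 by simp
  have "nn (Mc *\<^sub>v y) \<le> m * nn y"
    unfolding quad_nn[OF y] nn_co[OF y] sum_distrib_left
  proof (rule sum_mono)
    fix j assume j: "j \<in> {..<N}"
    show "ev j * (cmod (co y $ j))\<^sup>2 \<le> m * (cmod (co y $ j))\<^sup>2"
    proof (cases "j = j0")
      case True thus ?thesis using cy0 by simp
    next
      case False thus ?thesis using hm j unfolding m_def by (auto intro: mult_right_mono)
    qed
  qed
  moreover have "(nn y)\<^sup>2 \<le> nn (Mc *\<^sub>v y)"
  proof -
    have "y \<bullet>c y = u \<bullet>c (Mc *\<^sub>v y)" unfolding y_def by (rule Mt_adj, insert u y, auto simp: y_def)
    hence "nn y = Re (u \<bullet>c (Mc *\<^sub>v y))" unfolding nn_def by simp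
    hence "nn y \<le> cmod (u \<bullet>c (Mc *\<^sub>v y))" using complex_Re_le_cmod by simp
    hence "(nn y)\<^sup>2 \<le> (cmod (u \<bullet>c (Mc *\<^sub>v y)))\<^sup>2" using nn_nonneg[of y] by (intro power_mono) auto
    also have "\<dots> \<le> Re (u \<bullet>c u) * Re ((Mc *\<^sub>v y) \<bullet>c (Mc *\<^sub>v y))"
      by (rule cauchy_schwarz_c[of _ p], insert u y, auto)
    also have "\<dots> = nn (Mc *\<^sub>v y)" using u(3) unfolding nn_def by simp
    finally show ?thesis .
  qed
  ultimately have "(nn y)\<^sup>2 \<le> m * nn y" by linarith
  hence "nn y \<le> m" using nn_nonneg[of y] m0
    by (cases "nn y = 0") (auto simp: power2_eq_square)
  thus ?thesis unfolding y_def m_def .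
qed

end


context core begin

lemma realv_smult: "realv r \<Longrightarrow> realv (complex_of_real c \<cdot>\<^sub>v r)"
  unfolding realv_def by auto

lemma exist_from_w:
  assumes w: "w \<in> carrier_vec p" "w \<noteq> 0\<^sub>v p" and Kw: "K *\<^sub>v w = complex_of_real \<mu> \<cdot>\<^sub>v w"
    and wg: "w \<bullet>c g = 0"
  shows "\<exists>u. u \<in> carrier_vec p \<and> realv u \<and> u \<bullet>c g = 0 \<and> nn u = 1 \<and> nn (Mt *\<^sub>v u) = \<mu>"
proof -
  have "\<exists>r. r \<in> carrier_vec p \<and> realv r \<and> r \<noteq> 0\<^sub>v p \<and> K *\<^sub>v r = complex_of_real \<mu> \<cdot>\<^sub>v r \<and> r \<bullet>c g = 0"
  proof (cases "reV w = 0\<^sub>v p")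
    case False
    show ?thesis
      by (rule exI[of _ "reV w"], insert False w wg Kw, auto simp: reV_real realm_mult_re[OF Kc K_realm] reV_smult reV_ip[OF _ g gr])
  next
    case True
    have "imV w \<noteq> 0\<^sub>v p"
    proof
      assume "imV w = 0\<^sub>v p"
      hence "w = 0\<^sub>v p + \<i> \<cdot>\<^sub>v 0\<^sub>v p" using re_im_decomp[of w] True by metis
      moreover have "\<i> \<cdot>\<^sub>v 0\<^sub>v p = (0\<^sub>v p :: complex vec)" by (rule eq_vecI, auto)
      ultimately show False using w by simp
    qed
    thus ?thesis
      by (intro exI[of _ "imV w"], insert w wg Kw, auto simp: imV_real realm_mult_re[OF Kc K_realm] imV_smult reV_ip[OF _ g gr])
  qed
  then obtain r where r: "r \<in> carrier_vec p" "realv r" "r \<noteq> 0\<^sub>v p" and Kr: "K *\<^sub>v r = complex_of_real \<mu> \<cdot>\<^sub>v r"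
    and rg: "r \<bullet>c g = 0" by blast
  define s where "s = nn r"
  have s: "s > 0" unfolding s_def using nn_zero[OF r(1)] r(3) nn_nonneg[of r] by (auto simp: less_le)
  define c where "c = 1 / sqrt s"
  define u where "u = complex_of_real c \<cdot>\<^sub>v r"
  have u: "u \<in> carrier_vec p" unfolding u_def using r by simp
  have ur: "realv u" unfolding u_def using realv_smult[OF r(2)] .
  have ug: "u \<bullet>c g = 0" unfolding u_def using cip_smult_left[OF r(1) g] rg by simp
  have "(cmod (complex_of_real c))\<^sup>2 * s = c\<^sup>2 * s" by (simp only: norm_of_real power2_abs)
  also have "\<dots> = 1" unfolding c_def using s by (simp add: power_divide)
  finally have un: "nn u = 1" unfolding u_def nn_smult[OF r(1)] s_def[symmetric] .
  have Ku: "K *\<^sub>v u = complex_of_real \<mu> \<cdot>\<^sub>v u"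
    unfolding u_def using mult_mat_vec[OF Kc r(1)] Kr by (simp add: smult_smult_assoc mult.commute)
  have "(Mt *\<^sub>v u) \<bullet>c (Mt *\<^sub>v u) = u \<bullet>c (Mc *\<^sub>v (Mt *\<^sub>v u))" by (rule Mt_adj, insert u, auto)
  also have "\<dots> = u \<bullet>c (complex_of_real \<mu> \<cdot>\<^sub>v u)" unfolding Kv[OF u, symmetric] Ku ..
  also have "\<dots> = complex_of_real \<mu>" using cip_smult_right[OF u u] nn_of[of u] un by simp
  finally have "nn (Mt *\<^sub>v u) = \<mu>" unfolding nn_def by simp
  thus ?thesis using u ur ug un by blast
qed

lemma Kw_col: assumes j: "j < N" shows "K *\<^sub>v (Mc *\<^sub>v col U j) = es ! j \<cdot>\<^sub>v (Mc *\<^sub>v col U j)"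
proof -
  have "K *\<^sub>v (Mc *\<^sub>v col U j) = Mc *\<^sub>v (Cc *\<^sub>v col U j)"
    unfolding Kv[OF Mcv[OF colU[OF j]]] Cv[OF colU[OF j]] ..
  also have "\<dots> = es ! j \<cdot>\<^sub>v (Mc *\<^sub>v col U j)" unfolding eigen_col[OF j]
    using mult_mat_vec[OF Mc colU[OF j]] .
  finally show ?thesis .
qed

lemma w_orth: assumes j: "j < N" and k: "k < N"
  shows "(Mc *\<^sub>v col U j) \<bullet>c (Mc *\<^sub>v col U k) = (if j = k then es ! k else 0)"
proof -
  have "(Mc *\<^sub>v col U j) \<bullet>c (Mc *\<^sub>v col U k) = col U j \<bullet>c (Cc *\<^sub>v col U k)"
    unfolding Cv[OF colU[OF k]] by (rule Mc_adj, insert j k, auto)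
  also have "\<dots> = cnj (es ! k) * (col U j \<bullet>c col U k)" unfolding eigen_col[OF k]
    using cip_smult_right[OF colU[OF j] colU[OF k]] by simp
  also have "\<dots> = (if j = k then es ! k else 0)" unfolding col_orth[OF j k]
    using es_of[OF k] by auto
  finally show ?thesis .
qed

lemma exist:
  assumes j0: "j0 < N" "es ! j0 = 1" and j1: "j1 < N" "j1 \<noteq> j0"
    and hm: "\<forall>j<N. j \<noteq> j0 \<longrightarrow> ev j \<le> ev j1" and pos: "ev j1 > 0"
  shows "\<exists>u. u \<in> carrier_vec p \<and> realv u \<and> u \<bullet>c g = 0 \<and> nn u = 1 \<and> nn (Mt *\<^sub>v u) = ev j1"
proof (cases "ev j1 < 1")
  case True
  define w where "w = Mc *\<^sub>v col U j1"
  have w: "w \<in> carrier_vec p" unfolding w_def using j1 by simp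
  have nw: "nn w = ev j1" unfolding w_def ev_def using es_nn[OF j1(1)] by simp
  have w0: "w \<noteq> 0\<^sub>v p" using nn_zero[OF w] nw pos by auto
  have Kw: "K *\<^sub>v w = complex_of_real (ev j1) \<cdot>\<^sub>v w" unfolding w_def Kw_col[OF j1(1)] es_of[OF j1(1)] ..
  have "complex_of_real (ev j1) * (w \<bullet>c g) = (K *\<^sub>v w) \<bullet>c g"
    unfolding Kw using cip_smult_left[OF w g] by simp
  also have "\<dots> = w \<bullet>c g" using K_herm[OF w g] Kg by simp
  finally have "(complex_of_real (ev j1) - 1) * (w \<bullet>c g) = 0" by (simp add: algebra_simps)
  moreover have "complex_of_real (ev j1) - 1 \<noteq> 0" using True
    by (metis less_irrefl of_real_1 of_real_eq_iff right_minus_eq)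
  ultimately have "w \<bullet>c g = 0" by simp
  from exist_from_w[OF w w0 Kw this] show ?thesis .
next
  case False
  hence ev1: "ev j1 = 1" using ev_le1[OF j1(1)] by simp
  hence es1: "es ! j1 = 1" using es_of[OF j1(1)] by simp
  define w where "w = (\<lambda>j. Mc *\<^sub>v col U j)"
  have wc: "j < N \<Longrightarrow> w j \<in> carrier_vec p" for j unfolding w_def by simp
  define w' where "w' = (\<lambda>j. w j + (- (w j \<bullet>c g)) \<cdot>\<^sub>v g)"
  have w'c: "j < N \<Longrightarrow> w' j \<in> carrier_vec p" for j unfolding w'_def using wc g by simp
  have Kw': "K *\<^sub>v w' j = complex_of_real 1 \<cdot>\<^sub>v w' j" if j: "j < N" "es ! j = 1" for j
  proof -
    have "K *\<^sub>v w' j = K *\<^sub>v w j + (- (w j \<bullet>c g)) \<cdot>\<^sub>v (K *\<^sub>v g)"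
      unfolding w'_def by (rule K_lin[OF wc[OF j(1)] g])
    also have "K *\<^sub>v w j = w j" unfolding w_def Kw_col[OF j(1)] j(2) using wc[OF j(1)] unfolding w_def by simp
    finally show ?thesis unfolding Kg using w'c[OF j(1)] by (simp add: w'_def)
  qed
  have w'g: "w' j \<bullet>c g = 0" if j: "j < N" for j
  proof -
    have "w' j \<bullet>c g = w j \<bullet>c g + ((- (w j \<bullet>c g)) \<cdot>\<^sub>v g) \<bullet>c g"
      unfolding w'_def by (rule cip_add_left[OF wc[OF j] _ g], insert g, simp)
    also have "((- (w j \<bullet>c g)) \<cdot>\<^sub>v g) \<bullet>c g = - (w j \<bullet>c g)"
      using cip_smult_left[OF g g] g1 by simp
    finally show ?thesis by simp
  qed
  have "w' j0 \<noteq> 0\<^sub>v p \<or> w' j1 \<noteq> 0\<^sub>v p"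
  proof (rule ccontr)
    assume "\<not> ?thesis"
    hence z0: "w' j0 = 0\<^sub>v p" and z1: "w' j1 = 0\<^sub>v p" by auto
    define b0 where "b0 = w j0 \<bullet>c g"
    define b1 where "b1 = w j1 \<bullet>c g"
    have e0: "w j0 = b0 \<cdot>\<^sub>v g" using add_smult_zero[OF wc[OF j0(1)] g z0[unfolded w'_def]] unfolding b0_def by simp
    have e1: "w j1 = b1 \<cdot>\<^sub>v g" using add_smult_zero[OF wc[OF j1(1)] g z1[unfolded w'_def]] unfolding b1_def by simp
    have "w j0 \<bullet>c w j1 = 0" unfolding w_def using w_orth[OF j0(1) j1(1)] j1(2) by simp
    hence "b0 * cnj b1 = 0" unfolding e0 e1 cprod_smult[OF g g] g1 by simp
    moreover have "w j0 \<bullet>c w j0 = 1" unfolding w_def using w_orth[OF j0(1) j0(1)] j0(2) by simp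
    hence "b0 * cnj b0 = 1" unfolding e0 cprod_smult[OF g g] g1 by simp
    moreover have "w j1 \<bullet>c w j1 = 1" unfolding w_def using w_orth[OF j1(1) j1(1)] es1 by simp
    hence "b1 * cnj b1 = 1" unfolding e1 cprod_smult[OF g g] g1 by simp
    ultimately show False by auto
  qed
  then obtain j where j: "j < N" "es ! j = 1" "w' j \<noteq> 0\<^sub>v p" using j0 j1 es1 by auto
  from exist_from_w[OF w'c[OF j(1)] j(3) Kw'[OF j(1,2)] w'g[OF j(1)]] show ?thesis unfolding ev1 .
qed

end


lemma le_last_sorted: assumes "sorted l" "y \<in> set l" shows "y \<le> last l"
proof -
  from assms(2) obtain i where i: "i < length l" "l ! i = y" by (auto simp: in_set_conv_nth)
  have "l ! i \<le> l ! (length l - 1)" using assms(1) i by (intro sorted_nth_mono) auto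
  moreover have "last l = l ! (length l - 1)" using i by (intro last_conv_nth) auto
  ultimately show ?thesis using i by simp
qed

lemma second_largest:
  fixes xs :: "real list"
  assumes j0: "j0 < length xs" and mx: "\<forall>j<length xs. xs ! j \<le> xs ! j0" and len: "length xs \<ge> 2"
  shows "\<exists>j1<length xs. j1 \<noteq> j0 \<and> rev (sort xs) ! 1 = xs ! j1 \<and> (\<forall>j<length xs. j \<noteq> j0 \<longrightarrow> xs ! j \<le> xs ! j1)"
proof -
  define a where "a = xs ! j0"
  define ys where "ys = take j0 xs @ drop (Suc j0) xs"
  have xs: "xs = take j0 xs @ a # drop (Suc j0) xs" unfolding a_def using id_take_nth_drop[OF j0] .
  have "mset (take j0 xs @ a # drop (Suc j0) xs) = mset (ys @ [a])" unfolding ys_def by (simp add: ac_simps)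
  hence ms: "mset xs = mset (ys @ [a])" using xs by metis
  have sub: "set ys \<subseteq> set xs" unfolding ys_def using set_take_subset set_drop_subset by fastforce
  have ya: "\<forall>y\<in>set ys. y \<le> a"
  proof
    fix y assume "y \<in> set ys"
    hence "y \<in> set xs" using sub by auto
    then obtain j where "j < length xs" "xs ! j = y" by (auto simp: in_set_conv_nth)
    thus "y \<le> a" using mx unfolding a_def by auto
  qed
  have sorted1: "sort xs = sort ys @ [a]"
    by (rule properties_for_sort, insert ms ya, auto simp: sorted_append)
  have lys: "length ys = length xs - 1" unfolding ys_def using j0 by simp
  hence yne: "sort ys \<noteq> []" using len by (cases ys, auto)
  define v where "v = last (sort ys)"
  have r1: "rev (sort xs) ! 1 = v" unfolding sorted1 v_def using yne
    by (simp add: hd_rev[symmetric] hd_conv_nth)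
  have vin: "v \<in> set ys" unfolding v_def using last_in_set[OF yne] by simp
  have vmax: "y \<in> set ys \<Longrightarrow> y \<le> v" for y unfolding v_def by (rule le_last_sorted, auto)
  have inys: "xs ! j \<in> set ys" if "j < length xs" "j \<noteq> j0" for j
  proof (cases "j < j0")
    case True thus ?thesis unfolding ys_def using that by (auto simp: in_set_conv_nth intro!: exI[of _ j])
  next
    case False
    hence "j > j0" using that by simp
    hence "xs ! j = drop (Suc j0) xs ! (j - Suc j0)" using that by simp
    moreover have "j - Suc j0 < length (drop (Suc j0) xs)" using that \<open>j > j0\<close> by simp
    ultimately show ?thesis unfolding ys_def by (metis UnI2 nth_mem set_append)
  qed
  obtain j1 where j1: "j1 < length xs" "j1 \<noteq> j0" "xs ! j1 = v"
  proof -
    from vin consider "v \<in> set (take j0 xs)" | "v \<in> set (drop (Suc j0) xs)" unfolding ys_def by auto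
    thus ?thesis
    proof cases
      case 1
      then obtain i where "i < length (take j0 xs)" "take j0 xs ! i = v" by (auto simp: in_set_conv_nth)
      thus ?thesis using that[of i] j0 by auto
    next
      case 2
      then obtain i where "i < length (drop (Suc j0) xs)" "drop (Suc j0) xs ! i = v" by (auto simp: in_set_conv_nth)
      thus ?thesis using that[of "Suc j0 + i"] j0 by auto
    qed
  qed
  show ?thesis using j1 r1 vmax inys by (intro exI[of _ j1]) auto
qed


lemma sum_double: fixes n :: nat shows "(\<Sum>i\<in>{0..<2*n}. f i) = (\<Sum>i\<in>{0..<n}. f i) + (\<Sum>i\<in>{0..<n}. f (i + n))"
proof -
  have "(\<Sum>i\<in>{0..<2*n}. f i) = (\<Sum>i\<in>{0..<n}. f i) + (\<Sum>i\<in>{n..<2*n}. f i)"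
    by (rule sum.atLeastLessThan_concat[symmetric], auto)
  also have "{n..<2*n} = {0+n..<n+n}" by auto
  also have "(\<Sum>i\<in>{0+n..<n+n}. f i) = (\<Sum>i\<in>{0..<n}. f (i + n))" by (rule sum.shift_bounds_nat_ivl)
  finally show ?thesis .
qed

lemma sum_double': fixes n :: nat shows "(\<Sum>i<2*n. f i) = (\<Sum>i<n. f i) + (\<Sum>i<n. f (i + n))"
  using sum_double[where n=n and f=f] by (simp add: atLeast0LessThan)

lemma phase_vec_dim[simp]: "dim_vec (phase_vec y) = dim_vec y" unfolding phase_vec_def by simp

lemma phase_norm: "j < dim_vec y \<Longrightarrow> phase_vec y $ j * cnj (phase_vec y $ j) = 1"
proof -
  assume j: "j < dim_vec y"
  show ?thesis
  proof (cases "y $ j = 0")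
    case True thus ?thesis using j unfolding phase_vec_def by simp
  next
    case False
    hence c: "cmod (y $ j) \<noteq> 0" by simp
    have "phase_vec y $ j * cnj (phase_vec y $ j) = (y $ j * cnj (y $ j)) / (complex_of_real (cmod (y $ j)))\<^sup>2"
      using j False unfolding phase_vec_def by (simp add: power2_eq_square)
    also have "\<dots> = 1" unfolding mult_cnj_cmod using c by simp
    finally show ?thesis .
  qed
qed

lemma phase_mult: "j < dim_vec y \<Longrightarrow> cnj (phase_vec y $ j) * y $ j = complex_of_real (cmod (y $ j))"
proof -
  assume j: "j < dim_vec y"
  show ?thesis
  proof (cases "y $ j = 0")
    case True thus ?thesis using j unfolding phase_vec_def by simp
  next
    case False
    hence c: "cmod (y $ j) \<noteq> 0" by simp
    have "cnj (phase_vec y $ j) * y $ j = (y $ j * cnj (y $ j)) / complex_of_real (cmod (y $ j))"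
      using j False unfolding phase_vec_def by (simp add: mult.commute)
    also have "\<dots> = complex_of_real (cmod (y $ j))" unfolding mult_cnj_cmod using c
      by (simp add: power2_eq_square)
    finally show ?thesis .
  qed
qed

lemma diag_of_vec_carrier[simp]: "diag_of_vec d \<in> carrier_mat (dim_vec d) (dim_vec d)"
  unfolding diag_of_vec_def by auto

lemma diag_phase_unitary:
  fixes y :: "complex vec"
  defines "D \<equiv> diag_of_vec (phase_vec y)"
  shows "D * mat_adjoint D = 1\<^sub>m (dim_vec y)"
proof (rule eq_matI)
  fix i j assume "i < dim_row (1\<^sub>m (dim_vec y))" "j < dim_col (1\<^sub>m (dim_vec y))"
  hence i: "i < dim_vec y" and j: "j < dim_vec y" by auto
  have "(D * mat_adjoint D) $$ (i,j) = (\<Sum>k\<in>{0..<dim_vec y}. (if i = k then phase_vec y $ i else 0) * cnj (if j = k then phase_vec y $ j else 0))"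
    using i j unfolding D_def diag_of_vec_def by (auto simp: scalar_prod_def intro!: sum.cong)
  also have "\<dots> = (\<Sum>k\<in>{0..<dim_vec y}. if k = i then (if i = j then 1 else 0) else 0)"
    by (rule sum.cong, auto simp: phase_norm i)
  also have "\<dots> = 1\<^sub>m (dim_vec y) $$ (i,j)" using i j by simp
  finally show "(D * mat_adjoint D) $$ (i,j) = 1\<^sub>m (dim_vec y) $$ (i,j)" .
qed (auto simp: D_def diag_of_vec_def)

context
  fixes n N :: nat and A :: "complex mat" and x0 :: "complex vec"
  assumes A: "A \<in> carrier_mat n N" and AA: "A * mat_adjoint A = 1\<^sub>m n" and x0: "x0 \<in> carrier_vec n"
begin

definition "yy = mat_adjoint A *\<^sub>v x0"
definition "DD = diag_of_vec (phase_vec yy)"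

lemma yy: "yy \<in> carrier_vec N" unfolding yy_def using mult_mat_vec_carrier[OF adj_carrier[OF A] x0] .
lemma DD: "DD \<in> carrier_mat N N" unfolding DD_def using diag_of_vec_carrier[of "phase_vec yy"] yy by simp
lemma Bdef: "phaseB A x0 = A * DD" unfolding phaseB_def DD_def yy_def ..
lemma Bc: "phaseB A x0 \<in> carrier_mat n N" unfolding Bdef using A DD by auto

lemma BB: "phaseB A x0 * mat_adjoint (phaseB A x0) = 1\<^sub>m n"
proof -
  have DDa: "mat_adjoint DD \<in> carrier_mat N N" using DD by auto
  have Aa: "mat_adjoint A \<in> carrier_mat N n" using A by auto
  have DD1: "DD * mat_adjoint DD = 1\<^sub>m N" unfolding DD_def using diag_phase_unitary[of yy] yy by simp
  have "phaseB A x0 * mat_adjoint (phaseB A x0) = A * DD * (mat_adjoint DD * mat_adjoint A)"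
    unfolding Bdef adj_mult[OF A DD] ..
  also have "\<dots> = A * (DD * (mat_adjoint DD * mat_adjoint A))"
    by (rule assoc_mult_mat[OF A DD mult_carrier_mat[OF DDa Aa]])
  also have "DD * (mat_adjoint DD * mat_adjoint A) = (DD * mat_adjoint DD) * mat_adjoint A"
    by (rule assoc_mult_mat[OF DD DDa Aa, symmetric])
  also have "\<dots> = mat_adjoint A" unfolding DD1 by (rule left_mult_one_mat[OF Aa])
  finally show ?thesis using AA by simp
qed

lemma Bx0: "mat_adjoint (phaseB A x0) *\<^sub>v x0 = vec N (\<lambda>k. complex_of_real (cmod (yy $ k)))"
proof -
  have DDa: "mat_adjoint DD \<in> carrier_mat N N" using DD by auto
  have Aa: "mat_adjoint A \<in> carrier_mat N n" using A by auto
  have "mat_adjoint (phaseB A x0) *\<^sub>v x0 = (mat_adjoint DD * mat_adjoint A) *\<^sub>v x0"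
    unfolding Bdef adj_mult[OF A DD] ..
  also have "\<dots> = mat_adjoint DD *\<^sub>v yy" unfolding yy_def by (rule assoc_mult_mat_vec[OF DDa Aa x0])
  also have "\<dots> = vec N (\<lambda>k. complex_of_real (cmod (yy $ k)))"
  proof (rule eq_vecI)
    fix k assume "k < dim_vec (vec N (\<lambda>k. complex_of_real (cmod (yy $ k))))"
    hence k: "k < N" by simp
    have "(mat_adjoint DD *\<^sub>v yy) $ k = (\<Sum>i\<in>{0..<N}. cnj (if i = k then phase_vec yy $ k else 0) * yy $ i)"
      using k yy DD unfolding DD_def diag_of_vec_def by (auto simp: scalar_prod_def intro!: sum.cong)
    also have "\<dots> = (\<Sum>i\<in>{0..<N}. if i = k then cnj (phase_vec yy $ k) * yy $ k else 0)"
      by (rule sum.cong, auto)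
    also have "\<dots> = complex_of_real (cmod (yy $ k))" using k yy phase_mult[of k yy] by simp
    finally show "(mat_adjoint DD *\<^sub>v yy) $ k = vec N (\<lambda>k. complex_of_real (cmod (yy $ k))) $ k" using k by simp
  qed (insert DD, auto)
  finally show ?thesis .
qed

end


lemma rnorm_sq: "(rnorm x)\<^sup>2 = (\<Sum>i<dim_vec x. (x $ i)\<^sup>2)"
  unfolding rnorm_def by (simp add: sum_nonneg)

lemma cnorm_nn: "(cnorm v)\<^sup>2 = nn v"
  unfolding cnorm_def nn_def cprod_self_real by (simp add: sum_nonneg)

lemma nn_ofr: "nn (map_vec complex_of_real x) = (rnorm x)\<^sup>2"
  unfolding rnorm_sq nn_def cprod_self_real by (simp add: norm_of_real)

lemma nn_sum: "nn v = (\<Sum>i<dim_vec v. (cmod (v $ i))\<^sup>2)"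
  unfolding nn_def cprod_self_real by simp

lemma realify_car: "B \<in> carrier_mat n N \<Longrightarrow> realify B \<in> carrier_mat (2*n) N"
  unfolding realify_def carrier_mat_def by auto

lemma Gvec_car: "v \<in> carrier_vec n \<Longrightarrow> Gvec v \<in> carrier_vec (2*n)"
  unfolding Gvec_def carrier_vec_def by auto

lemma realify_G: assumes B: "B \<in> carrier_mat n N" and v: "v \<in> carrier_vec n"
  shows "transpose_mat (realify B) *\<^sub>v Gvec v = vec N (\<lambda>k. Re ((mat_adjoint B *\<^sub>v v) $ k))"
proof (rule eq_vecI)
  fix k assume "k < dim_vec (vec N (\<lambda>k. Re ((mat_adjoint B *\<^sub>v v) $ k)))"
  hence k: "k < N" by simp
  have dB: "dim_row B = n" "dim_col B = N" using B by auto
  have "(transpose_mat (realify B) *\<^sub>v Gvec v) $ k = (\<Sum>i\<in>{0..<2*n}. realify B $$ (i,k) * Gvec v $ i)"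
    using k B v realify_car[OF B] Gvec_car[OF v] by (auto simp: scalar_prod_def)
  also have "\<dots> = (\<Sum>i\<in>{0..<n}. Re (B $$ (i,k)) * Re (v $ i)) + (\<Sum>i\<in>{0..<n}. Im (B $$ (i,k)) * Im (v $ i))"
    unfolding sum_double using k dB v by (auto simp: realify_def Gvec_def intro!: sum.cong)
  also have "\<dots> = Re (\<Sum>i\<in>{0..<n}. cnj (B $$ (i,k)) * v $ i)"
    by (simp add: Re_sum sum.distrib)
  also have "\<dots> = Re ((mat_adjoint B *\<^sub>v v) $ k)"
    using k dB v by (auto simp: scalar_prod_def intro!: arg_cong[of _ _ Re] sum.cong)
  finally show "(transpose_mat (realify B) *\<^sub>v Gvec v) $ k = vec N (\<lambda>k. Re ((mat_adjoint B *\<^sub>v v) $ k)) $ k"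
    using k by simp
qed (insert B, auto simp: realify_def)

lemma Gvec_norm: "(rnorm (Gvec v))\<^sup>2 = nn v"
  unfolding rnorm_sq nn_sum
proof -
  have "(\<Sum>i<dim_vec (Gvec v). (Gvec v $ i)\<^sup>2) = (\<Sum>i<2 * dim_vec v. (Gvec v $ i)\<^sup>2)" unfolding Gvec_def by simp
  also have "\<dots> = (\<Sum>i<dim_vec v. (Re (v $ i))\<^sup>2) + (\<Sum>i<dim_vec v. (Im (v $ i))\<^sup>2)"
    unfolding sum_double' by (auto simp: Gvec_def)
  also have "\<dots> = (\<Sum>i<dim_vec v. (cmod (v $ i))\<^sup>2)" by (simp add: cmod_power2 sum.distrib)
  finally show "(\<Sum>i<dim_vec (Gvec v). (Gvec v $ i)\<^sup>2) = (\<Sum>i<dim_vec v. (cmod (v $ i))\<^sup>2)" .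
qed

lemma rnorm_Gvec: "rnorm (Gvec v) = cnorm v"
proof -
  have "(rnorm (Gvec v))\<^sup>2 = (cnorm v)\<^sup>2" unfolding Gvec_norm cnorm_nn ..
  moreover have "rnorm (Gvec v) \<ge> 0" "cnorm v \<ge> 0" unfolding rnorm_def cnorm_def by (auto intro!: sum_nonneg)
  ultimately show ?thesis by (metis power2_eq_iff_nonneg)
qed

lemma Gvec_dot: assumes "a \<in> carrier_vec n" "b \<in> carrier_vec n"
  shows "Gvec a \<bullet> Gvec b = cinner_re a b"
proof -
  have "Gvec a \<bullet> Gvec b = (\<Sum>i\<in>{0..<2*n}. Gvec a $ i * Gvec b $ i)"
    using assms Gvec_car[OF assms(2)] by (simp add: scalar_prod_def)
  also have "\<dots> = (\<Sum>i\<in>{0..<n}. Re (a $ i) * Re (b $ i)) + (\<Sum>i\<in>{0..<n}. Im (a $ i) * Im (b $ i))"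
    unfolding sum_double using assms by (auto simp: Gvec_def intro!: sum.cong)
  also have "\<dots> = cinner_re a b"
    unfolding cinner_re_def using assms by (simp add: Re_sum sum.distrib atLeast0LessThan)
  finally show ?thesis .
qed

lemma Gvec_surj: assumes w: "w \<in> carrier_vec (2*n)"
  shows "Gvec (vec n (\<lambda>k. Complex (w $ k) (w $ (k + n)))) = w"
  by (rule eq_vecI, insert w, auto simp: Gvec_def)

lemma realm_ofr: "realm (map_mat complex_of_real M)" unfolding realm_def by auto

lemma adj_ofr: "mat_adjoint (map_mat complex_of_real M) = map_mat complex_of_real (transpose_mat M)"
  by (rule eq_matI, auto)

lemma realv_ofr: "realv (map_vec complex_of_real x)" unfolding realv_def by auto

lemma realv_eq: "realv u \<Longrightarrow> u = map_vec complex_of_real (map_vec Re u)"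
  unfolding realv_def by (intro eq_vecI, auto simp: complex_eq_iff)

lemma reV_ofr: "reV z = map_vec complex_of_real (map_vec Re z)" "imV z = map_vec complex_of_real (map_vec Im z)"
  unfolding reV_def imV_def by (auto intro: eq_vecI)

lemma nn_split: "nn w = nn (reV w) + nn (imV w)"
  unfolding nn_sum reV_def imV_def by (simp add: cmod_power2 sum.distrib norm_of_real)


lemma ip_ofr: assumes "x \<in> carrier_vec k" "w \<in> carrier_vec k"
  shows "map_vec complex_of_real x \<bullet>c map_vec complex_of_real w = complex_of_real (x \<bullet> w)"
  using assms unfolding cip_sum by (simp add: scalar_prod_def atLeast0LessThan)

lemma cnorm_nonneg: "cnorm v \<ge> 0" unfolding cnorm_def by (auto intro!: sum_nonneg)
lemma rnorm_nonneg: "rnorm v \<ge> 0" unfolding rnorm_def by (auto intro!: sum_nonneg)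

lemma rnorm_eq_sqrt: "rnorm x = sqrt ((rnorm x)\<^sup>2)" using rnorm_nonneg by simp

lemma cinner_neg: assumes "u \<in> carrier_vec n" "x \<in> carrier_vec n"
  shows "cinner_re ((- c) \<cdot>\<^sub>v u) x = - cinner_re (c \<cdot>\<^sub>v u) x"
  using assms unfolding cinner_re_def by (simp add: sum_negf Re_sum)

lemma Im_vec_G: assumes B: "B \<in> carrier_mat n N" and u: "u \<in> carrier_vec n"
  shows "Im_vec (mat_adjoint B *\<^sub>v u) = transpose_mat (realify B) *\<^sub>v Gvec ((- \<i>) \<cdot>\<^sub>v u)"
proof -
  have "mat_adjoint B *\<^sub>v ((- \<i>) \<cdot>\<^sub>v u) = (- \<i>) \<cdot>\<^sub>v (mat_adjoint B *\<^sub>v u)"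
    using mult_mat_vec[OF adj_carrier[OF B] u] .
  moreover have iu: "(- \<i>) \<cdot>\<^sub>v u \<in> carrier_vec n" using u by simp
  ultimately show ?thesis unfolding realify_G[OF B iu] Im_vec_def
    using B u by (intro eq_vecI, auto)
qed

theorem mainTheorem7:
  fixes n N :: nat and A :: "complex mat" and x0 :: "complex vec"
  assumes "A \<in> carrier_mat n N"
    and "A * mat_adjoint A = 1\<^sub>m n"
    and "N \<ge> 2 * n"
    and "x0 \<in> carrier_vec n"
    and "cnorm x0 = 1"
  shows "is_max_of {rnorm (Im_vec (mat_adjoint (phaseB A x0) *\<^sub>v u)) | u.
            u \<in> carrier_vec n \<and> cinner_re (smult_vec \<i> u) x0 = 0 \<and> cnorm u = 1}
           (singular_values (realify (phaseB A x0)) ! 1)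
       \<and> is_max_of {rnorm (transpose_mat (realify (phaseB A x0)) *\<^sub>v u) | u.
            u \<in> carrier_vec (2 * n) \<and> u \<bullet> Gvec x0 = 0 \<and> rnorm u = 1}
           (singular_values (realify (phaseB A x0)) ! 1)"
proof -
  note A = assms(1) and AA = assms(2) and NN = assms(3) and x0 = assms(4) and nx0 = assms(5)
  define B where "B = phaseB A x0"
  have Bc: "B \<in> carrier_mat n N" unfolding B_def using Bc[OF A AA x0] .
  have Ba: "mat_adjoint B \<in> carrier_mat N n" using Bc by auto
  have BB: "B * mat_adjoint B = 1\<^sub>m n" unfolding B_def using BB[OF A AA x0] .
  have Bx0: "mat_adjoint B *\<^sub>v x0 = vec N (\<lambda>k. complex_of_real (cmod (yy A x0 $ k)))"
    unfolding B_def using Bx0[OF A AA x0] .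
  have Bnorm: "nn (mat_adjoint B *\<^sub>v v) = nn v" if v: "v \<in> carrier_vec n" for v
  proof -
    have "(mat_adjoint B *\<^sub>v v) \<bullet>c (mat_adjoint B *\<^sub>v v) = v \<bullet>c (B *\<^sub>v (mat_adjoint B *\<^sub>v v))"
      using mat_vec_adj[OF Ba v, of "mat_adjoint B *\<^sub>v v"] Ba v by auto
    also have "B *\<^sub>v (mat_adjoint B *\<^sub>v v) = v"
      using assoc_mult_mat_vec[OF Bc Ba v] BB v by simp
    finally show ?thesis unfolding nn_def by simp
  qed
  have n0: "n > 0"
  proof (rule ccontr)
    assume "\<not> n > 0" hence "n = 0" by simp
    hence "cnorm x0 = 0" using x0 unfolding cnorm_def by simp
    thus False using nx0 by simp
  qed
  have N2: "N \<ge> 2" using NN n0 by linarith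
  define Mr where "Mr = realify B"
  have MrC: "Mr \<in> carrier_mat (2*n) N" unfolding Mr_def using realify_car[OF Bc] .
  have MrT: "transpose_mat Mr \<in> carrier_mat N (2*n)" using MrC by auto
  define Mc where "Mc = map_mat complex_of_real Mr"
  have Mc: "Mc \<in> carrier_mat (2*n) N" unfolding Mc_def using MrC by auto
  have Mt: "mat_adjoint Mc = map_mat complex_of_real (transpose_mat Mr)" unfolding Mc_def adj_ofr ..
  have Mtc: "mat_adjoint Mc \<in> carrier_mat N (2*n)" using Mc by auto
  have MtvR: "mat_adjoint Mc *\<^sub>v map_vec complex_of_real x = map_vec complex_of_real (transpose_mat Mr *\<^sub>v x)"
    if x: "x \<in> carrier_vec (2*n)" for x
    unfolding Mt by (rule of_real_hom.mult_mat_vec_hom[OF MrT x, symmetric])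
  define g where "g = map_vec complex_of_real (Gvec x0)"
  have Gx0: "Gvec x0 \<in> carrier_vec (2*n)" using Gvec_car[OF x0] .
  have g: "g \<in> carrier_vec (2*n)" unfolding g_def using Gx0 by simp
  have "nn g = (rnorm (Gvec x0))\<^sup>2" unfolding g_def by (rule nn_ofr)
  also have "\<dots> = nn x0" by (rule Gvec_norm)
  also have "\<dots> = 1" using nx0 cnorm_nn[of x0] by simp
  finally have ng: "nn g = 1" .
  have g1: "g \<bullet>c g = 1" using nn_of[of g] ng by simp
  define Cc where "Cc = mat_adjoint Mc * Mc"
  have Cc: "Cc \<in> carrier_mat N N" unfolding Cc_def using Mtc Mc by auto
  have Ch: "mat_adjoint Cc = Cc" unfolding Cc_def adj_mult[OF Mtc Mc] adj_adj ..
  have Ceq: "Cc = map_mat complex_of_real (transpose_mat Mr * Mr)"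
    unfolding Cc_def Mt unfolding Mc_def by (rule of_real_hom.mat_hom_mult[OF MrT MrC, symmetric])
  obtain U es where uU: "unitary U N" and les: "length es = N" and Cd: "Cc = U * diagm es * mat_adjoint U"
    using hermitian_decomp[OF Cc Ch] by blast
  have H1r: "nn (mat_adjoint Mc *\<^sub>v map_vec complex_of_real x) \<le> nn (map_vec complex_of_real x)"
    if x: "x \<in> carrier_vec (2*n)" for x
  proof -
    define v where "v = vec n (\<lambda>k. Complex (x $ k) (x $ (k + n)))"
    have v: "v \<in> carrier_vec n" unfolding v_def by simp
    have xv: "x = Gvec v" unfolding v_def using Gvec_surj[OF x] by simp
    have "nn (mat_adjoint Mc *\<^sub>v map_vec complex_of_real x) = (rnorm (transpose_mat Mr *\<^sub>v x))\<^sup>2"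
      unfolding MtvR[OF x] nn_ofr ..
    also have "\<dots> = (\<Sum>k<N. (Re ((mat_adjoint B *\<^sub>v v) $ k))\<^sup>2)"
      unfolding rnorm_sq xv Mr_def realify_G[OF Bc v] by simp
    also have "\<dots> \<le> (\<Sum>k<N. (cmod ((mat_adjoint B *\<^sub>v v) $ k))\<^sup>2)"
      by (rule sum_mono, simp add: cmod_power2)
    also have "\<dots> = nn (mat_adjoint B *\<^sub>v v)"
    proof -
      have dv: "dim_vec (mat_adjoint B *\<^sub>v v) = N" using Bc by simp
      show ?thesis unfolding nn_sum dv ..
    qed
    also have "\<dots> = nn v" using Bnorm[OF v] .
    also have "\<dots> = nn (map_vec complex_of_real x)" unfolding nn_ofr xv Gvec_norm ..
    finally show ?thesis .
  qed
  have MtR: "realm (mat_adjoint Mc)" unfolding Mt by (rule realm_ofr)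
  have H1: "nn (mat_adjoint Mc *\<^sub>v z) \<le> nn z" if z: "z \<in> carrier_vec (2*n)" for z
  proof -
    have rz: "map_vec Re z \<in> carrier_vec (2*n)" and iz: "map_vec Im z \<in> carrier_vec (2*n)" using z by auto
    have "nn (mat_adjoint Mc *\<^sub>v z) = nn (reV (mat_adjoint Mc *\<^sub>v z)) + nn (imV (mat_adjoint Mc *\<^sub>v z))"
      by (rule nn_split)
    also have "reV (mat_adjoint Mc *\<^sub>v z) = mat_adjoint Mc *\<^sub>v reV z"
      using realm_mult_re(1)[OF Mtc MtR z] by simp
    also have "imV (mat_adjoint Mc *\<^sub>v z) = mat_adjoint Mc *\<^sub>v imV z"
      using realm_mult_re(2)[OF Mtc MtR z] by simp
    finally have "nn (mat_adjoint Mc *\<^sub>v z) = nn (mat_adjoint Mc *\<^sub>v reV z) + nn (mat_adjoint Mc *\<^sub>v imV z)" .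
    also have "\<dots> \<le> nn (reV z) + nn (imV z)"
      unfolding reV_ofr using H1r[OF rz] H1r[OF iz] by simp
    also have "\<dots> = nn z" by (rule nn_split[symmetric])
    finally show ?thesis .
  qed
  have H2: "nn (mat_adjoint Mc *\<^sub>v g) = 1"
  proof -
    have "nn (mat_adjoint Mc *\<^sub>v g) = (rnorm (transpose_mat Mr *\<^sub>v Gvec x0))\<^sup>2"
      unfolding g_def MtvR[OF Gx0] nn_ofr ..
    also have "\<dots> = (\<Sum>k<N. (Re ((mat_adjoint B *\<^sub>v x0) $ k))\<^sup>2)"
      unfolding rnorm_sq Mr_def realify_G[OF Bc x0] by simp
    also have "\<dots> = (\<Sum>k<N. (cmod ((mat_adjoint B *\<^sub>v x0) $ k))\<^sup>2)"
      by (rule sum.cong, simp, simp add: Bx0 norm_of_real)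
    also have "\<dots> = nn (mat_adjoint B *\<^sub>v x0)"
    proof -
      have dv: "dim_vec (mat_adjoint B *\<^sub>v x0) = N" using Bc by simp
      show ?thesis unfolding nn_sum dv ..
    qed
    also have "\<dots> = nn x0" using Bnorm[OF x0] .
    also have "\<dots> = 1" using nx0 cnorm_nn[of x0] by simp
    finally show ?thesis .
  qed
  have rMc: "realm Mc" unfolding Mc_def by (rule realm_ofr)
  have rg: "realv g" unfolding g_def by (rule realv_ofr)
  have CcM: "Cc = mat_adjoint Mc * Mc" unfolding Cc_def ..
  have cr: "core Cc U es N Mc (2*n) g"
    by (rule core.intro[OF specd.intro[OF uU les Cd] core_axioms.intro[OF Mc rMc CcM g rg g1 H1 H2]])
  interpret core Cc U es N Mc "2*n" g by (rule cr)
  have ge: "gram_eigenvalues Mr = mset es"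
    unfolding gram_eigenvalues_def Ceq[symmetric] using proots_Cc .
  define f where "f = (\<lambda>z::complex. sqrt (Re z))"
  define xs where "xs = map f es"
  have lxs: "length xs = N" unfolding xs_def using les by simp
  have xsj: "j < N \<Longrightarrow> xs ! j = sqrt (ev j)" for j unfolding xs_def f_def ev_def using les by simp
  have dM: "dim_row Mr = 2*n" "dim_col Mr = N" using MrC by auto
  have im: "image_mset (\<lambda>z. sqrt (Re z)) (mset es) = mset xs" unfolding xs_def f_def by (rule mset_map[symmetric])
  have sv: "singular_values Mr = take (min (2*n) N) (rev (sort xs))"
    unfolding singular_values_def ge im dM sorted_list_of_multiset_mset ..
  obtain j0 where j0: "j0 < N" "es ! j0 = 1" using j0_ex by blast
  have ev0: "ev j0 = 1" unfolding ev_def using j0 by simp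
  have mx: "\<forall>j<length xs. xs ! j \<le> xs ! j0"
  proof (intro allI impI)
    fix j assume "j < length xs"
    hence j: "j < N" using lxs by simp
    show "xs ! j \<le> xs ! j0" unfolding xsj[OF j] xsj[OF j0(1)] ev0 using ev_le1[OF j] by simp
  qed
  have j0x: "j0 < length xs" using j0 lxs by simp
  have lx2: "length xs \<ge> 2" using lxs N2 by simp
  obtain j1 where j1': "j1 < length xs" "j1 \<noteq> j0" and r1: "rev (sort xs) ! 1 = xs ! j1"
    and j1m': "\<forall>j<length xs. j \<noteq> j0 \<longrightarrow> xs ! j \<le> xs ! j1"
    using second_largest[OF j0x mx lx2] by blast
  have j1: "j1 < N" "j1 \<noteq> j0" using j1' lxs by auto
  have j1m: "\<forall>j<N. j \<noteq> j0 \<longrightarrow> xs ! j \<le> xs ! j1" using j1m' lxs by simp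
  define lam where "lam = singular_values Mr ! 1"
  have lam: "lam = sqrt (ev j1)"
  proof -
    have "1 < min (2*n) N" using n0 N2 by simp
    moreover have "length (rev (sort xs)) = N" using lxs by simp
    ultimately have "lam = rev (sort xs) ! 1" unfolding lam_def sv by simp
    thus ?thesis unfolding r1 xsj[OF j1(1)] .
  qed
  have hm: "\<forall>j<N. j \<noteq> j0 \<longrightarrow> ev j \<le> ev j1"
    using j1m xsj j1 by auto
  define S2 where "S2 = {rnorm (transpose_mat Mr *\<^sub>v u) | u. u \<in> carrier_vec (2 * n) \<and> u \<bullet> Gvec x0 = 0 \<and> rnorm u = 1}"
  have up: "rnorm (transpose_mat Mr *\<^sub>v u) \<le> lam"
    if u: "u \<in> carrier_vec (2 * n)" "u \<bullet> Gvec x0 = 0" "rnorm u = 1" for u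
  proof -
    let ?u = "map_vec complex_of_real u"
    have uc: "?u \<in> carrier_vec (2*n)" using u by simp
    have ug: "?u \<bullet>c g = 0" unfolding g_def ip_ofr[OF u(1) Gx0] u(2) by simp
    have un: "nn ?u = 1" unfolding nn_ofr u(3) by simp
    have "nn (mat_adjoint Mc *\<^sub>v ?u) \<le> ev j1" using upper[OF j0 j1 hm uc ug un] .
    hence "(rnorm (transpose_mat Mr *\<^sub>v u))\<^sup>2 \<le> ev j1" unfolding MtvR[OF u(1)] nn_ofr .
    thus ?thesis unfolding lam using rnorm_eq_sqrt real_sqrt_le_mono by metis
  qed
  have ex: "\<exists>u. u \<in> carrier_vec (2 * n) \<and> u \<bullet> Gvec x0 = 0 \<and> rnorm u = 1 \<and> rnorm (transpose_mat Mr *\<^sub>v u) = lam"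
  proof (cases "ev j1 > 0")
    case True
    from exist[OF j0 j1 hm True] obtain u where u: "u \<in> carrier_vec (2*n)" "realv u" "u \<bullet>c g = 0"
      "nn u = 1" "nn (mat_adjoint Mc *\<^sub>v u) = ev j1" by blast
    define ur where "ur = map_vec Re u"
    have ur: "ur \<in> carrier_vec (2*n)" unfolding ur_def using u by simp
    have ue: "u = map_vec complex_of_real ur" unfolding ur_def using realv_eq[OF u(2)] .
    have "complex_of_real (ur \<bullet> Gvec x0) = 0" using u(3) unfolding ue g_def ip_ofr[OF ur Gx0] .
    hence "ur \<bullet> Gvec x0 = 0" by simp
    moreover have "rnorm ur = 1" using u(4) unfolding ue nn_ofr using rnorm_eq_sqrt by (metis real_sqrt_one)
    moreover have "rnorm (transpose_mat Mr *\<^sub>v ur) = lam"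
      using u(5) unfolding ue MtvR[OF ur] nn_ofr lam using rnorm_eq_sqrt by metis
    ultimately show ?thesis using ur by blast
  next
    case False
    hence e0: "ev j1 = 0" using ev_ge0[OF j1(1)] by simp
    define ur where "ur = Gvec (\<i> \<cdot>\<^sub>v x0)"
    have ix0: "\<i> \<cdot>\<^sub>v x0 \<in> carrier_vec n" using x0 by simp
    have ur: "ur \<in> carrier_vec (2*n)" unfolding ur_def using Gvec_car[OF ix0] .
    have "ur \<bullet> Gvec x0 = cinner_re (\<i> \<cdot>\<^sub>v x0) x0" unfolding ur_def by (rule Gvec_dot[OF ix0 x0])
    also have "\<dots> = 0" unfolding cinner_re_def using x0 by (simp add: Re_sum)
    finally have o: "ur \<bullet> Gvec x0 = 0" .
    have "(rnorm ur)\<^sup>2 = nn (\<i> \<cdot>\<^sub>v x0)" unfolding ur_def Gvec_norm ..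
    also have "\<dots> = nn x0" using nn_smult[OF x0, of \<i>] by simp
    also have "\<dots> = 1" using nx0 cnorm_nn[of x0] by simp
    finally have r: "rnorm ur = 1" using rnorm_eq_sqrt by (metis real_sqrt_one)
    have "rnorm (transpose_mat Mr *\<^sub>v ur) \<le> 0" using up[OF ur o r] unfolding lam e0 by simp
    hence "rnorm (transpose_mat Mr *\<^sub>v ur) = lam" unfolding lam e0 using rnorm_nonneg by (simp add: eq_iff)
    thus ?thesis using ur o r by blast
  qed
  have max2: "is_max_of S2 lam"
    unfolding is_max_of_def S2_def using up ex by blast
  define S1 where "S1 = {rnorm (Im_vec (mat_adjoint B *\<^sub>v u)) | u.
            u \<in> carrier_vec n \<and> cinner_re (smult_vec \<i> u) x0 = 0 \<and> cnorm u = 1}"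
  have S12: "S1 = S2"
  proof
    show "S1 \<subseteq> S2"
    proof
      fix r assume "r \<in> S1"
      then obtain u where u: "u \<in> carrier_vec n" "cinner_re (\<i> \<cdot>\<^sub>v u) x0 = 0" "cnorm u = 1"
        and r: "r = rnorm (Im_vec (mat_adjoint B *\<^sub>v u))" unfolding S1_def by blast
      have iu: "(- \<i>) \<cdot>\<^sub>v u \<in> carrier_vec n" using u by simp
      have "r = rnorm (transpose_mat Mr *\<^sub>v Gvec ((- \<i>) \<cdot>\<^sub>v u))" unfolding r Mr_def Im_vec_G[OF Bc u(1)] ..
      moreover have "Gvec ((- \<i>) \<cdot>\<^sub>v u) \<in> carrier_vec (2*n)" using Gvec_car[OF iu] .
      moreover have "Gvec ((- \<i>) \<cdot>\<^sub>v u) \<bullet> Gvec x0 = 0"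
        unfolding Gvec_dot[OF iu x0] cinner_neg[OF u(1) x0] u(2) by simp
      moreover have "rnorm (Gvec ((- \<i>) \<cdot>\<^sub>v u)) = 1"
      proof -
        have "(rnorm (Gvec ((- \<i>) \<cdot>\<^sub>v u)))\<^sup>2 = nn u" unfolding Gvec_norm nn_smult[OF u(1)] by simp
        also have "\<dots> = 1" using u(3) cnorm_nn[of u] by simp
        finally show ?thesis using rnorm_eq_sqrt by (metis real_sqrt_one)
      qed
      ultimately show "r \<in> S2" unfolding S2_def by blast
    qed
    show "S2 \<subseteq> S1"
    proof
      fix r assume "r \<in> S2"
      then obtain w where w: "w \<in> carrier_vec (2*n)" "w \<bullet> Gvec x0 = 0" "rnorm w = 1"
        and r: "r = rnorm (transpose_mat Mr *\<^sub>v w)" unfolding S2_def by blast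
      define v where "v = vec n (\<lambda>k. Complex (w $ k) (w $ (k + n)))"
      have v: "v \<in> carrier_vec n" unfolding v_def by simp
      have wv: "w = Gvec v" unfolding v_def using Gvec_surj[OF w(1)] by simp
      define u where "u = \<i> \<cdot>\<^sub>v v"
      have u: "u \<in> carrier_vec n" unfolding u_def using v by simp
      have vu: "(- \<i>) \<cdot>\<^sub>v u = v" unfolding u_def using v by (intro eq_vecI, auto)
      have "r = rnorm (Im_vec (mat_adjoint B *\<^sub>v u))"
        unfolding r Im_vec_G[OF Bc u] vu wv Mr_def ..
      moreover have "cinner_re (\<i> \<cdot>\<^sub>v u) x0 = 0"
      proof -
        have "cinner_re ((- \<i>) \<cdot>\<^sub>v u) x0 = 0" unfolding vu using w(2) unfolding wv Gvec_dot[OF v x0] .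
        thus ?thesis unfolding cinner_neg[OF u x0] by simp
      qed
      moreover have "cnorm u = 1"
      proof -
        have "(cnorm u)\<^sup>2 = nn v" unfolding cnorm_nn u_def nn_smult[OF v] by simp
        also have "\<dots> = 1" using w(3) unfolding wv Gvec_norm[symmetric] by simp
        finally show ?thesis using cnorm_nonneg[of u] by (metis abs_of_nonneg power2_eq_1_iff real_sqrt_abs real_sqrt_one)
      qed
      ultimately show "r \<in> S1" using u unfolding S1_def by blast
    qed
  qed
  show ?thesis using max2 S12 unfolding S1_def S2_def lam_def Mr_def B_def by simp
qed


end
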